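(* Consider the following cooperative multi-player multi-armed bandit problem ("Problem A"). There are $M$ players $P_1,\dots,P_M$; player $P_i$ has a finite set $\mathcal{K}_i=\{1,\dots,K_i\}$ of arms. At each round $t=1,\dots,T$ each player $P_i$ picks an arm $a_i(t)\in\mathcal{K}_i$, giving the arm-tuple $a(t)=(a_1(t),\dots,a_M(t))$. For each arm-tuple $a\in\mathcal{K}_1\times\cdots\times\mathcal{K}_M$ there is an unknown $1$-subgaussian distribution $F_a$ supported in $[0,1]$ with mean $\mu_a$; when $a(t)$ is played, a reward $X_{a(t)}(t)\sim F_{a(t)}$ is drawn independently across rounds and this common reward is observed by all players. No player observes the arms chosen by the others and there is no communication during play. Let $\mu^*=\max_a\mu_a$, $\Delta_a=\mu^*-\mu_a$, and $R_T=\mathbb{E}\big[T\mu^*-\sum_{t=1}^T X_{a(t)}(t)\big]$. Suppose every player runs the \texttt{mUCB} algorithm: in the first $K_1\cdots K_M$ rounds, player $P_i$ starts at its arm $1$ and successively pulls each of its arms $K_{i+1}\cdots K_M$ consecutive times before moving to the next arm, repeating this epoch $K_1\cdots K_{i-1}$ times (so every tuple is played once); afterwards, at round $t$, each player computes for each tuple $a$ the index $\eta_a(t)=\infty$ if $n_a(t)=0$ and otherwise $\eta_a(t)=\hat\mu_a(t)+\sqrt{2\log(1/\delta)/n_a(t)}$ with $\delta=1/t^2$, where $n_a(t)$ is the number of times tuple $a$ was played in the first $t$ rounds and $\hat\mu_a(t)$ the average of the corresponding rewards, and player $P_i$ plays the $i$-th component of a maximizing tuple, ties broken in favour of the lexicographically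 smallest tuple. Let $\epsilon=\sqrt{\log T/T}$. Then $$R_T\le 3K_1\cdots K_M+\Big(1+\sum_{a:\,\Delta_a>\epsilon}(6+4\sqrt2)\Big)\sqrt{T\log T}.$$
   Context: Lexicographic order: $(x_1,\dots,x_M)<(y_1,\dots,y_M)$ iff there is $n$ with $x_j=y_j$ for all $j<n$ and $x_n<y_n$. *)

theory Defs
  imports "HOL-Probability.Probability"
begin

text \<open>Players are indexed 0..M-1 where M = length Ks; player i has arms {1..Ks!i}.
  An arm-tuple is a list a of length M with 1 \<le> a!i \<le> Ks!i.\<close>

definition arm_tuples :: "nat list \<Rightarrow> nat list set" where
  "arm_tuples Ks = {a. length a = length Ks \<and> (\<forall>i<length Ks. 1 \<le> a!i \<and> a!i \<le> Ks!i)}"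

definition lex_less :: "nat list \<Rightarrow> nat list \<Rightarrow> bool" where
  "lex_less x y \<longleftrightarrow> (\<exists>n<length x. (\<forall>j<n. x!j = y!j) \<and> x!n < y!n)"

definition init_arm :: "nat list \<Rightarrow> nat \<Rightarrow> nat \<Rightarrow> nat" where
  "init_arm Ks i t = ((t - 1) div prod_list (drop (Suc i) Ks)) mod (Ks!i) + 1"

text \<open>History h = list of the tuples played in rounds 1..length h (h!(s-1) is a(s));
  r a s is the reward of tuple a at round s.\<close>
definition play_count :: "nat list list \<Rightarrow> nat list \<Rightarrow> nat" where
  "play_count h a = card {s\<in>{1..length h}. h!(s-1) = a}"

definition emp_mean :: "(nat list \<Rightarrow> nat \<Rightarrow> real) \<Rightarrow> nat list list \<Rightarrow> nat list \<Rightarrow> real" where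
  "emp_mean r h a = (\<Sum>s | s\<in>{1..length h} \<and> h!(s-1) = a. r a s) / real (play_count h a)"

definition ucb_index :: "(nat list \<Rightarrow> nat \<Rightarrow> real) \<Rightarrow> nat list list \<Rightarrow> nat list \<Rightarrow> ereal" where
  "ucb_index r h a =
     (if play_count h a = 0 then \<infinity>
      else ereal (emp_mean r h a +
             sqrt (2 * ln (1 / (1 / real (length h)^2)) / real (play_count h a))))"

definition ucb_best :: "nat list \<Rightarrow> (nat list \<Rightarrow> nat \<Rightarrow> real) \<Rightarrow> nat list list \<Rightarrow> nat list" where
  "ucb_best Ks r h = (THE a. a \<in> arm_tuples Ks \<and>
      (\<forall>b\<in>arm_tuples Ks. ucb_index r h b \<le> ucb_index r h a) \<and>
      (\<forall>b\<in>arm_tuples Ks. ucb_index r h b = ucb_index r h a \<longrightarrow> b = a \<or> lex_less a b))"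

text \<open>Arm chosen by player i at round length h + 1, given the history h.\<close>
definition player_arm :: "nat list \<Rightarrow> (nat list \<Rightarrow> nat \<Rightarrow> real) \<Rightarrow> nat list list \<Rightarrow> nat \<Rightarrow> nat" where
  "player_arm Ks r h i =
     (if length h + 1 \<le> prod_list Ks then init_arm Ks i (length h + 1)
      else ucb_best Ks r h ! i)"

definition next_tuple :: "nat list \<Rightarrow> (nat list \<Rightarrow> nat \<Rightarrow> real) \<Rightarrow> nat list list \<Rightarrow> nat list" where
  "next_tuple Ks r h = map (player_arm Ks r h) [0..<length Ks]"

primrec mucb_hist :: "nat list \<Rightarrow> (nat list \<Rightarrow> nat \<Rightarrow> real) \<Rightarrow> nat \<Rightarrow> nat list list" where
  "mucb_hist Ks r 0 = []"
| "mucb_hist Ks r (Suc t) = mucb_hist Ks r t @ [next_tuple Ks r (mucb_hist Ks r t)]"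

text \<open>Arm-tuple a(t) played at round t \<ge> 1 when all players run mUCB.\<close>
definition mucb_action :: "nat list \<Rightarrow> (nat list \<Rightarrow> nat \<Rightarrow> real) \<Rightarrow> nat \<Rightarrow> nat list" where
  "mucb_action Ks r t = next_tuple Ks r (mucb_hist Ks r (t - 1))"

definition subgaussian :: "real \<Rightarrow> real measure \<Rightarrow> bool" where
  "subgaussian \<sigma> F \<longleftrightarrow> integrable F (\<lambda>x. x) \<and>
     (\<forall>l::real. integrable F (\<lambda>x. exp (l * (x - (\<integral>y. y \<partial>F)))) \<and>
        (\<integral>x. exp (l * (x - (\<integral>y. y \<partial>F))) \<partial>F) \<le> exp (\<sigma>\<^sup>2 * l\<^sup>2 / 2))"

end

theory Submission
  imports Defs
begin



lemma arm_tuples_finite: "finite (arm_tuples Ks)"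
proof -
  have "arm_tuples Ks \<subseteq> {xs. set xs \<subseteq> {0..sum_list Ks} \<and> length xs = length Ks}"
  proof
    fix a assume "a \<in> arm_tuples Ks"
    then have a: "length a = length Ks" "\<forall>i<length Ks. 1 \<le> a!i \<and> a!i \<le> Ks!i"
      by (auto simp: arm_tuples_def)
    have "set a \<subseteq> {0..sum_list Ks}"
    proof
      fix x assume "x \<in> set a"
      then obtain i where i: "i < length a" "x = a!i" by (auto simp: in_set_conv_nth)
      then have "x \<le> Ks!i" using a by auto
      also have "Ks!i \<le> sum_list Ks" using i a by (metis elem_le_sum_list)
      finally show "x \<in> {0..sum_list Ks}" by simp
    qed
    then show "a \<in> {xs. set xs \<subseteq> {0..sum_list Ks} \<and> length xs = length Ks}" using a by simp
  qed
  then show ?thesis by (rule finite_subset) (rule finite_lists_length_eq, simp)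
qed

lemma arm_tuples_Cons: "arm_tuples (k # Ks) = (\<lambda>(x, xs). x # xs) ` ({1..k} \<times> arm_tuples Ks)"
proof (rule set_eqI, rule iffI)
  fix a assume "a \<in> arm_tuples (k # Ks)"
  then obtain x xs where a: "a = x # xs" unfolding arm_tuples_def by (cases a) auto
  have "x \<in> {1..k}" using \<open>a \<in> _\<close> a unfolding arm_tuples_def by force
  moreover have "xs \<in> arm_tuples Ks" using \<open>a \<in> _\<close> a unfolding arm_tuples_def by force
  ultimately show "a \<in> (\<lambda>(x, xs). x # xs) ` ({1..k} \<times> arm_tuples Ks)" using a by force
next
  fix a assume "a \<in> (\<lambda>(x, xs). x # xs) ` ({1..k} \<times> arm_tuples Ks)"
  then obtain x xs where a: "a = x # xs" "x \<in> {1..k}" "xs \<in> arm_tuples Ks" by auto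
  then show "a \<in> arm_tuples (k # Ks)" unfolding arm_tuples_def by (auto simp: nth_Cons split: nat.split)
qed

lemma arm_tuples_card: "card (arm_tuples Ks) \<le> prod_list Ks"
proof (induction Ks)
  case Nil
  have "arm_tuples [] = {[]}" by (auto simp: arm_tuples_def)
  then show ?case by simp
next
  case (Cons k Ks)
  have "card (arm_tuples (k # Ks)) \<le> card ({1..k} \<times> arm_tuples Ks)"
    unfolding arm_tuples_Cons by (rule card_image_le) (simp add: arm_tuples_finite)
  also have "\<dots> = k * card (arm_tuples Ks)" by (simp add: card_cartesian_product)
  also have "\<dots> \<le> k * prod_list Ks" using Cons by simp
  finally show ?case by simp
qed

lemma arm_tuples_ne: "(\<forall>i<length Ks. 1 \<le> Ks!i) \<Longrightarrow> replicate (length Ks) 1 \<in> arm_tuples Ks"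
  by (auto simp: arm_tuples_def)

lemma arm_tuples_length: "a \<in> arm_tuples Ks \<Longrightarrow> length a = length Ks"
  by (auto simp: arm_tuples_def)

lemma lex_less_irrefl: "\<not> lex_less x x"
  by (auto simp: lex_less_def)

lemma lex_less_trans:
  assumes "lex_less x y" "lex_less y z" "length x = length y" "length y = length z"
  shows "lex_less x z"
proof -
  obtain n1 where n1: "n1 < length x" "\<forall>j<n1. x!j = y!j" "x!n1 < y!n1" using assms(1) by (auto simp: lex_less_def)
  obtain n2 where n2: "n2 < length y" "\<forall>j<n2. y!j = z!j" "y!n2 < z!n2" using assms(2) by (auto simp: lex_less_def)
  show ?thesis unfolding lex_less_def
  proof (intro exI[of _ "min n1 n2"] conjI allI impI)
    show "min n1 n2 < length x" using n1 by simp
    fix j assume "j < min n1 n2" then show "x!j = z!j" using n1 n2 by simp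
  next
    show "x ! min n1 n2 < z ! min n1 n2"
      using n1 n2 by (cases "n1 < n2"; cases "n1 = n2") (auto simp: min_def)
  qed
qed

lemma lex_less_total:
  assumes "length x = length y" "x \<noteq> y"
  shows "lex_less x y \<or> lex_less y x"
proof -
  obtain i where i: "i < length x" "x!i \<noteq> y!i" using assms nth_equalityI by blast
  define n where "n = (LEAST i. i < length x \<and> x!i \<noteq> y!i)"
  have n: "n < length x" "x!n \<noteq> y!n" using LeastI[of "\<lambda>i. i < length x \<and> x!i \<noteq> y!i", OF conjI[OF i]]
    by (auto simp: n_def)
  have pre: "\<forall>j<n. x!j = y!j"
  proof (intro allI impI, rule ccontr)
    fix j assume "j < n" "x!j \<noteq> y!j"
    have "j < length x" using \<open>j < n\<close> n(1) by simp
    then have "n \<le> j" unfolding n_def using \<open>x!j \<noteq> y!j\<close> by (intro Least_le) simp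
    with \<open>j < n\<close> show False by simp
  qed
  show ?thesis
  proof (cases "x!n < y!n")
    case True then show ?thesis using n pre unfolding lex_less_def by blast
  next
    case False then have "y!n < x!n" using n by simp
    then show ?thesis using n pre assms(1) unfolding lex_less_def by (metis)
  qed
qed

lemma lex_min_exists:
  assumes "finite A" "A \<noteq> {}" "\<forall>x\<in>A. length x = m"
  shows "\<exists>b\<in>A. \<forall>c\<in>A. c = b \<or> lex_less b c"
  using assms
proof (induction A rule: finite_ne_induct)
  case (singleton x) then show ?case by simp
next
  case (insert x F)
  then obtain b where b: "b \<in> F" "\<forall>c\<in>F. c = b \<or> lex_less b c" by auto
  show ?case
  proof (cases "lex_less x b")
    case True
    have "\<forall>c\<in>insert x F. c = x \<or> lex_less x c"
      using b True insert.prems lex_less_trans[of x b] by auto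
    then show ?thesis by blast
  next
    case False
    then have "x = b \<or> lex_less b x" using lex_less_total[of x b] insert.prems b by auto
    then show ?thesis using b by auto
  qed
qed

abbreviation ucb_pred where
  "ucb_pred Ks r h a \<equiv> a \<in> arm_tuples Ks \<and>
      (\<forall>b\<in>arm_tuples Ks. ucb_index r h b \<le> ucb_index r h a) \<and>
      (\<forall>b\<in>arm_tuples Ks. ucb_index r h b = ucb_index r h a \<longrightarrow> b = a \<or> lex_less a b)"

lemma ucb_pred_unique:
  assumes "ucb_pred Ks r h a" "ucb_pred Ks r h b" shows "a = b"
proof -
  have "ucb_index r h b = ucb_index r h a" using assms by (meson order_antisym)
  then have "b = a \<or> lex_less a b" "a = b \<or> lex_less b a" using assms by auto
  moreover have "a \<in> arm_tuples Ks" "b \<in> arm_tuples Ks" using assms by auto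
  then have "length a = length b" by (simp add: arm_tuples_length)
  ultimately show ?thesis using lex_less_trans lex_less_irrefl by metis
qed

lemma ucb_pred_exists:
  assumes "arm_tuples Ks \<noteq> {}"
  shows "\<exists>a. ucb_pred Ks r h a"
proof -
  let ?S = "arm_tuples Ks"
  let ?f = "ucb_index r h"
  have fin: "finite (?f ` ?S)" using arm_tuples_finite by simp
  define m where "m = Max (?f ` ?S)"
  have m: "m \<in> ?f ` ?S" "\<forall>b\<in>?S. ?f b \<le> m" using fin assms unfolding m_def by auto
  define A where "A = {a\<in>?S. ?f a = m}"
  have "finite A" "A \<noteq> {}" "\<forall>x\<in>A. length x = length Ks"
    using m arm_tuples_finite by (auto simp: A_def arm_tuples_length)
  then obtain b where b: "b \<in> A" "\<forall>c\<in>A. c = b \<or> lex_less b c" using lex_min_exists by blast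
  have "ucb_pred Ks r h b" using b m by (auto simp: A_def)
  then show ?thesis by blast
qed

lemma ucb_best_spec:
  assumes "arm_tuples Ks \<noteq> {}"
  shows "ucb_pred Ks r h (ucb_best Ks r h)"
  unfolding ucb_best_def
  by (rule theI') (use ucb_pred_exists[OF assms] ucb_pred_unique in blast)

lemma ucb_best_eq:
  assumes "arm_tuples Ks \<noteq> {}" "ucb_pred Ks r h a"
  shows "ucb_best Ks r h = a"
  using ucb_pred_unique[OF ucb_best_spec[OF assms(1)] assms(2)] .

lemma init_tuple_in:
  assumes "\<forall>i<length Ks. 1 \<le> Ks!i"
  shows "map (\<lambda>i. init_arm Ks i t) [0..<length Ks] \<in> arm_tuples Ks"
proof -
  have "\<And>i. i < length Ks \<Longrightarrow> init_arm Ks i t \<le> Ks ! i"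
  proof -
    fix i assume "i < length Ks"
    then have "0 < Ks!i" using assms by force
    then show "init_arm Ks i t \<le> Ks!i" unfolding init_arm_def
      by (metis Suc_eq_plus1 Suc_leI mod_less_divisor)
  qed
  then show ?thesis by (auto simp: arm_tuples_def init_arm_def)
qed

lemma next_tuple_eq:
  assumes "\<forall>i<length Ks. 1 \<le> Ks!i"
  shows "next_tuple Ks r h = (if length h + 1 \<le> prod_list Ks
      then map (\<lambda>i. init_arm Ks i (length h + 1)) [0..<length Ks] else ucb_best Ks r h)"
proof (cases "length h + 1 \<le> prod_list Ks")
  case True then show ?thesis by (simp add: next_tuple_def player_arm_def)
next
  case False
  have "ucb_best Ks r h \<in> arm_tuples Ks" using ucb_best_spec arm_tuples_ne[OF assms] by blast
  then have "length (ucb_best Ks r h) = length Ks" by (simp add: arm_tuples_length)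
  then have "map (\<lambda>i. ucb_best Ks r h ! i) [0..<length Ks] = ucb_best Ks r h"
    by (metis map_nth)
  moreover have "player_arm Ks r h = (\<lambda>i. ucb_best Ks r h ! i)" using False by (auto simp: player_arm_def fun_eq_iff)
  ultimately show ?thesis using False by (simp add: next_tuple_def)
qed

lemma next_tuple_in:
  assumes "\<forall>i<length Ks. 1 \<le> Ks!i"
  shows "next_tuple Ks r h \<in> arm_tuples Ks"
proof -
  have "arm_tuples Ks \<noteq> {}" using arm_tuples_ne[OF assms] by auto
  then show ?thesis using next_tuple_eq[OF assms] init_tuple_in[OF assms] ucb_best_spec[of Ks r h] by auto
qed

lemma mucb_action_in:
  assumes "\<forall>i<length Ks. 1 \<le> Ks!i"
  shows "mucb_action Ks r t \<in> arm_tuples Ks"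
  unfolding mucb_action_def using next_tuple_in[OF assms] .

lemma mucb_hist_length[simp]: "length (mucb_hist Ks r t) = t"
  by (induction t) auto

lemma mucb_hist_nth: "s < t \<Longrightarrow> mucb_hist Ks r t ! s = mucb_action Ks r (Suc s)"
proof (induction t)
  case 0 then show ?case by simp
next
  case (Suc t)
  then show ?case
    by (cases "s < t") (auto simp: nth_append mucb_action_def less_Suc_eq)
qed




lemma ucb_index_local:
  assumes "\<forall>s\<in>{1..length h}. r b s = r' b s"
  shows "ucb_index r h b = ucb_index r' h b"
proof -
  have "emp_mean r h b = emp_mean r' h b" unfolding emp_mean_def
    using assms by (intro arg_cong2[where f="(/)"] sum.cong) auto
  then show ?thesis by (simp add: ucb_index_def)
qed

lemma ucb_best_local:
  assumes "\<forall>b\<in>arm_tuples Ks. \<forall>s\<in>{1..length h}. r b s = r' b s"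
  shows "ucb_best Ks r h = ucb_best Ks r' h"
proof -
  have I: "b \<in> arm_tuples Ks \<Longrightarrow> ucb_index r h b = ucb_index r' h b" for b
    using assms ucb_index_local by blast
  have "ucb_pred Ks r h a = ucb_pred Ks r' h a" for a
    by (cases "a \<in> arm_tuples Ks") (auto simp: I)
  then show ?thesis unfolding ucb_best_def by simp
qed

lemma next_tuple_local:
  assumes "\<forall>b\<in>arm_tuples Ks. \<forall>s\<in>{1..length h}. r b s = r' b s"
  shows "next_tuple Ks r h = next_tuple Ks r' h"
  using ucb_best_local[OF assms] by (simp add: next_tuple_def player_arm_def)

lemma mucb_hist_local:
  assumes "\<forall>b\<in>arm_tuples Ks. \<forall>s\<in>{1..t}. r b s = r' b s"
  shows "mucb_hist Ks r t = mucb_hist Ks r' t"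
  using assms
proof (induction t)
  case 0 then show ?case by simp
next
  case (Suc t)
  then have IH: "mucb_hist Ks r t = mucb_hist Ks r' t" by auto
  have "next_tuple Ks r (mucb_hist Ks r t) = next_tuple Ks r' (mucb_hist Ks r t)"
    by (rule next_tuple_local) (use Suc.prems in auto)
  then show ?case using IH by simp
qed

lemma mucb_action_local:
  assumes "\<forall>b\<in>arm_tuples Ks. \<forall>s\<in>{1..t - 1}. r b s = r' b s"
  shows "mucb_action Ks r t = mucb_action Ks r' t"
proof -
  have "mucb_hist Ks r (t - 1) = mucb_hist Ks r' (t - 1)" by (rule mucb_hist_local[OF assms])
  moreover have "next_tuple Ks r (mucb_hist Ks r (t-1)) = next_tuple Ks r' (mucb_hist Ks r (t-1))"
    by (rule next_tuple_local) (use assms in auto)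
  ultimately show ?thesis by (simp add: mucb_action_def)
qed



lemma ucb_index_meas:
  assumes [measurable]: "\<And>a s. (\<lambda>x. r x a s) \<in> borel_measurable M"
  shows "(\<lambda>x. ucb_index (r x) h b) \<in> borel_measurable M"
  unfolding ucb_index_def emp_mean_def by measurable

lemma ucb_best_meas:
  assumes Kpos: "\<forall>i<length Ks. 1 \<le> Ks!i"
  assumes [measurable]: "\<And>a s. (\<lambda>x. r x a s) \<in> borel_measurable M"
  shows "(\<lambda>x. ucb_best Ks (r x) h) \<in> measurable M (count_space UNIV)"
proof -
  have ne: "arm_tuples Ks \<noteq> {}" using arm_tuples_ne[OF Kpos] by auto
  have [measurable]: "(\<lambda>x. ucb_index (r x) h b) \<in> borel_measurable M" for b
    by (rule ucb_index_meas) simp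
  have P1[measurable]: "Measurable.pred M (\<lambda>x. \<forall>c\<in>arm_tuples Ks. ucb_index (r x) h c \<le> ucb_index (r x) h b)" for b
    by (rule pred_intros_countable_bounded(3)) measurable
  have P2[measurable]: "Measurable.pred M (\<lambda>x. \<forall>c\<in>{c\<in>arm_tuples Ks. \<not> (c = b \<or> lex_less b c)}. ucb_index (r x) h c \<noteq> ucb_index (r x) h b)" for b
    by (rule pred_intros_countable_bounded(3)) measurable
  have P: "Measurable.pred M (\<lambda>x. ucb_pred Ks (r x) h b)" for b
  proof -
    have "Measurable.pred M (\<lambda>x. b \<in> arm_tuples Ks \<and> (\<forall>c\<in>arm_tuples Ks. ucb_index (r x) h c \<le> ucb_index (r x) h b) \<and>
       (\<forall>c\<in>{c\<in>arm_tuples Ks. \<not> (c = b \<or> lex_less b c)}. ucb_index (r x) h c \<noteq> ucb_index (r x) h b))"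
      by measurable
    moreover have "\<And>x. ucb_pred Ks (r x) h b \<longleftrightarrow> (b \<in> arm_tuples Ks \<and> (\<forall>c\<in>arm_tuples Ks. ucb_index (r x) h c \<le> ucb_index (r x) h b) \<and>
       (\<forall>c\<in>{c\<in>arm_tuples Ks. \<not> (c = b \<or> lex_less b c)}. ucb_index (r x) h c \<noteq> ucb_index (r x) h b))"
      by blast
    ultimately show ?thesis by simp
  qed
  show ?thesis
  proof (subst measurable_count_space_eq2_countable, safe)
    fix b
    have "(\<lambda>x. ucb_best Ks (r x) h) -` {b} \<inter> space M = {x\<in>space M. ucb_pred Ks (r x) h b}"
    proof (intro set_eqI iffI)
      fix x assume "x \<in> (\<lambda>x. ucb_best Ks (r x) h) -` {b} \<inter> space M"
      then show "x \<in> {x\<in>space M. ucb_pred Ks (r x) h b}"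
        using ucb_best_spec[OF ne, where r="r x" and h=h] by auto
    next
      fix x assume "x \<in> {x\<in>space M. ucb_pred Ks (r x) h b}"
      then show "x \<in> (\<lambda>x. ucb_best Ks (r x) h) -` {b} \<inter> space M"
        using ucb_best_eq[OF ne, where r="r x" and h=h and a=b] by auto
    qed
    then show "(\<lambda>x. ucb_best Ks (r x) h) -` {b} \<inter> space M \<in> sets M" using P by simp
  qed simp
qed

lemma next_tuple_meas:
  assumes Kpos: "\<forall>i<length Ks. 1 \<le> Ks!i"
  assumes [measurable]: "\<And>a s. (\<lambda>x. r x a s) \<in> borel_measurable M"
  shows "(\<lambda>x. next_tuple Ks (r x) h) \<in> measurable M (count_space UNIV)"
proof -
  have "(\<lambda>x. next_tuple Ks (r x) h) = (\<lambda>x. (\<lambda>b. if length h + 1 \<le> prod_list Ks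
      then map (\<lambda>i. init_arm Ks i (length h + 1)) [0..<length Ks] else b) (ucb_best Ks (r x) h))"
    by (simp add: next_tuple_eq[OF Kpos])
  also have "\<dots> \<in> measurable M (count_space UNIV)"
    by (rule measurable_compose[OF ucb_best_meas[OF Kpos assms(2)]]) simp
  finally show ?thesis .
qed

lemma mucb_hist_meas:
  assumes Kpos: "\<forall>i<length Ks. 1 \<le> Ks!i"
  assumes [measurable]: "\<And>a s. (\<lambda>x. r x a s) \<in> borel_measurable M"
  shows "(\<lambda>x. mucb_hist Ks (r x) t) \<in> measurable M (count_space UNIV)"
proof (induction t)
  case 0 then show ?case by simp
next
  case (Suc t)
  have "(\<lambda>x. (\<lambda>h. h @ [next_tuple Ks (r x) h]) (mucb_hist Ks (r x) t)) \<in> measurable M (count_space UNIV)"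
  proof (rule measurable_compose_countable[OF _ Suc])
    fix h
    show "(\<lambda>x. h @ [next_tuple Ks (r x) h]) \<in> measurable M (count_space UNIV)"
      by (rule measurable_compose[OF next_tuple_meas[OF Kpos assms(2)]]) simp
  qed
  then show ?case by simp
qed

lemma hist_fun_meas:
  assumes Kpos: "\<forall>i<length Ks. 1 \<le> Ks!i"
  assumes "\<And>a s. (\<lambda>x. r x a s) \<in> borel_measurable M"
  shows "(\<lambda>x. f (mucb_hist Ks (r x) t)) \<in> measurable M (count_space UNIV)"
    "(\<lambda>x. g (mucb_hist Ks (r x) t)) \<in> borel_measurable M"
  by (rule measurable_compose[OF mucb_hist_meas[OF assms]]; simp)+




definition cntS :: "(nat \<Rightarrow> 'b) \<Rightarrow> 'b \<Rightarrow> nat \<Rightarrow> nat" where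
  "cntS A a j = card {s\<in>{1..j}. A s = a}"

lemma cntS_0[simp]: "cntS A a 0 = 0" by (simp add: cntS_def)

lemma cntS_Suc: "cntS A a (Suc j) = cntS A a j + (if A (Suc j) = a then 1 else 0)"
proof -
  have "{s\<in>{1..Suc j}. A s = a} = (if A (Suc j) = a then insert (Suc j) {s\<in>{1..j}. A s = a} else {s\<in>{1..j}. A s = a})"
    by (auto simp: le_Suc_eq)
  then show ?thesis by (simp add: cntS_def)
qed

lemma cntS_mono: "i \<le> j \<Longrightarrow> cntS A a i \<le> cntS A a j"
proof (induction j)
  case 0 then show ?case by simp
next
  case (Suc j) then show ?case by (cases "i = Suc j") (auto simp: cntS_Suc le_Suc_eq)
qed

lemma cntS_le: "cntS A a j \<le> j"
  by (induction j) (auto simp: cntS_Suc)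

lemma cntS_strict: "A (Suc t1) = a \<Longrightarrow> t1 < t2 \<Longrightarrow> cntS A a t1 < cntS A a t2"
proof -
  assume "A (Suc t1) = a" "t1 < t2"
  then have "cntS A a (Suc t1) = cntS A a t1 + 1" by (simp add: cntS_Suc)
  moreover have "cntS A a (Suc t1) \<le> cntS A a t2" using \<open>t1 < t2\<close> by (intro cntS_mono) simp
  ultimately show ?thesis by simp
qed

lemma cntS_inj: "inj_on (cntS A a) {t. A (Suc t) = a}"
proof (rule inj_onI)
  fix x y assume "x \<in> {t. A (Suc t) = a}" "y \<in> {t. A (Suc t) = a}" "cntS A a x = cntS A a y"
  show "x = y"
  proof (rule ccontr)
    assume "x \<noteq> y"
    then consider "x < y" | "y < x" by linarith
    then show False
    proof cases
      case 1 then show False using cntS_strict[of A x a y] \<open>x \<in> _\<close> \<open>cntS A a x = _\<close> by simp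
    next
      case 2 then show False using cntS_strict[of A y a x] \<open>y \<in> _\<close> \<open>cntS A a x = _\<close> by simp
    qed
  qed
qed

lemma cntS_prefix_set:
  assumes "cntS A a t = n" "t \<le> T"
  shows "{s\<in>{1..t}. A s = a} = {s\<in>{1..T}. A s = a \<and> cntS A a (s - 1) < n}"
proof (intro set_eqI iffI)
  fix s assume s: "s \<in> {s\<in>{1..t}. A s = a}"
  then have "A (Suc (s - 1)) = a" "s - 1 < t" by auto
  then have "cntS A a (s - 1) < cntS A a t" by (rule cntS_strict)
  then show "s \<in> {s\<in>{1..T}. A s = a \<and> cntS A a (s - 1) < n}" using s assms by auto
next
  fix s assume s: "s \<in> {s\<in>{1..T}. A s = a \<and> cntS A a (s - 1) < n}"
  have "s - 1 < t"
  proof (rule ccontr)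
    assume "\<not> s - 1 < t"
    then have "cntS A a t \<le> cntS A a (s - 1)" by (intro cntS_mono) simp
    then show False using s assms by simp
  qed
  then show "s \<in> {s\<in>{1..t}. A s = a}" using s by auto
qed

lemma cntS_first_card: "card {s\<in>{1..T}. A s = a \<and> cntS A a (s - 1) < n} \<le> n"
proof -
  let ?B = "{s\<in>{1..T}. A s = a \<and> cntS A a (s - 1) < n}"
  have inj: "inj_on (\<lambda>s. cntS A a (s - 1)) ?B"
  proof (rule inj_onI)
    fix x y assume x: "x \<in> ?B" and y: "y \<in> ?B" and e: "cntS A a (x - 1) = cntS A a (y - 1)"
    have "x - 1 \<in> {t. A (Suc t) = a}" "y - 1 \<in> {t. A (Suc t) = a}" using x y by auto
    then have "x - 1 = y - 1" using cntS_inj[of A a] e by (meson inj_onD)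
    then show "x = y" using x y by auto
  qed
  have sub: "(\<lambda>s. cntS A a (s - 1)) ` ?B \<subseteq> {..<n}" by auto
  have "card ?B \<le> card {..<n}" by (rule card_inj_on_le[OF inj sub]) simp
  then show ?thesis by simp
qed

lemma play_count_hist:
  "play_count (mucb_hist Ks r j) a = cntS (mucb_action Ks r) a j"
proof -
  have "{s\<in>{1..length (mucb_hist Ks r j)}. mucb_hist Ks r j ! (s - 1) = a} = {s\<in>{1..j}. mucb_action Ks r s = a}"
    by (auto simp: mucb_hist_nth)
  then show ?thesis by (simp add: play_count_def cntS_def)
qed

lemma emp_mean_hist:
  "emp_mean r (mucb_hist Ks r j) a = (\<Sum>s\<in>{s\<in>{1..j}. mucb_action Ks r s = a}. r a s) / real (cntS (mucb_action Ks r) a j)"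
proof -
  have "{s. s\<in>{1..length (mucb_hist Ks r j)} \<and> mucb_hist Ks r j ! (s - 1) = a} = {s\<in>{1..j}. mucb_action Ks r s = a}"
    by (auto simp: mucb_hist_nth)
  then show ?thesis by (simp add: emp_mean_def play_count_hist)
qed




definition Sf :: "nat list \<Rightarrow> (nat list \<Rightarrow> nat \<Rightarrow> real) \<Rightarrow> (nat list \<Rightarrow> real) \<Rightarrow> nat \<Rightarrow> nat list \<Rightarrow> nat \<Rightarrow> real" where
  "Sf Ks r \<mu> T a n = (\<Sum>s\<in>{s\<in>{1..T}. mucb_action Ks r s = a \<and> cntS (mucb_action Ks r) a (s - 1) < n}. r a s - \<mu> a)"

lemma Sf_prefix:
  assumes "cntS (mucb_action Ks r) a t = n" "t \<le> T"
  shows "(\<Sum>s\<in>{s\<in>{1..t}. mucb_action Ks r s = a}. r a s) = Sf Ks r \<mu> T a n + real n * \<mu> a"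
proof -
  let ?P = "{s\<in>{1..t}. mucb_action Ks r s = a}"
  have "Sf Ks r \<mu> T a n = (\<Sum>s\<in>?P. r a s - \<mu> a)"
    unfolding Sf_def using cntS_prefix_set[OF assms] by simp
  also have "\<dots> = (\<Sum>s\<in>?P. r a s) - real (card ?P) * \<mu> a"
    by (simp add: sum_subtractf)
  also have "card ?P = n" using assms(1) by (simp add: cntS_def)
  finally show ?thesis by simp
qed

lemma ln_inv_inv: "t \<ge> 1 \<Longrightarrow> ln (1 / (1 / real t ^ 2)) = 2 * ln (real t)"
  by (simp add: ln_realpow)

lemma index_formula:
  assumes "t \<ge> 1" "t \<le> T" "cntS (mucb_action Ks r) a t = n" "n \<ge> 1"
  shows "ucb_index r (mucb_hist Ks r t) a =
     ereal ((Sf Ks r \<mu> T a n + real n * \<mu> a) / real n + sqrt (4 * ln (real t) / real n))"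
proof -
  have pc: "play_count (mucb_hist Ks r t) a = n" using assms by (simp add: play_count_hist)
  have em: "emp_mean r (mucb_hist Ks r t) a = (Sf Ks r \<mu> T a n + real n * \<mu> a) / real n"
    using emp_mean_hist[of r Ks t a] Sf_prefix[OF assms(3,2), of \<mu>] assms(3) by simp
  show ?thesis unfolding ucb_index_def using pc em assms(4) ln_inv_inv[OF assms(1)] by simp
qed

lemma sqrt_div_aux: "n \<ge> 1 \<Longrightarrow> L \<ge> 0 \<Longrightarrow> real n * sqrt (4 * L / real n) = sqrt (4 * real n * L)"
proof -
  assume n: "n \<ge> 1" and L: "L \<ge> 0"
  have "real n = sqrt (real n * real n)" by simp
  then have "real n * sqrt (4 * L / real n) = sqrt (real n * real n * (4 * L / real n))"
    by (metis real_sqrt_mult)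
  also have "real n * real n * (4 * L / real n) = 4 * real n * L" using n by (simp add: field_simps)
  finally show ?thesis .
qed

lemma opt_index_ge:
  assumes "t \<ge> 1" "t \<le> T"
    and noE: "\<forall>n\<in>{1..t}. Sf Ks r \<mu> T a n \<ge> - sqrt (4 * real n * ln (real t))"
  shows "ucb_index r (mucb_hist Ks r t) a \<ge> ereal (\<mu> a)"
proof (cases "cntS (mucb_action Ks r) a t = 0")
  case True
  then have "play_count (mucb_hist Ks r t) a = 0" by (simp add: play_count_hist)
  then show ?thesis by (simp add: ucb_index_def)
next
  case False
  define n where "n = cntS (mucb_action Ks r) a t"
  have n: "n \<ge> 1" "n \<le> t" using False cntS_le[of "mucb_action Ks r" a t] by (auto simp: n_def)
  have L: "ln (real t) \<ge> 0" using assms by simp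
  have Sfn: "Sf Ks r \<mu> T a n \<ge> - sqrt (4 * real n * ln (real t))" using noE n by auto
  have "real n * \<mu> a \<le> Sf Ks r \<mu> T a n + real n * \<mu> a + real n * sqrt (4 * ln (real t) / real n)"
    using Sfn sqrt_div_aux[OF n(1) L] by simp
  then have "\<mu> a \<le> (Sf Ks r \<mu> T a n + real n * \<mu> a) / real n + sqrt (4 * ln (real t) / real n)"
    using n by (simp add: field_simps)
  then show ?thesis using index_formula[OF assms(1,2) n_def[symmetric] n(1), of \<mu>] by simp
qed

lemma index_ge_imp:
  assumes "t \<ge> 1" "t \<le> T" "cntS (mucb_action Ks r) a t = n" "n \<ge> 1"
    and ge: "ucb_index r (mucb_hist Ks r t) a \<ge> ereal m"
  shows "Sf Ks r \<mu> T a n \<ge> real n * (m - \<mu> a) - sqrt (4 * real n * ln (real t))"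
proof -
  have L: "ln (real t) \<ge> 0" using assms by simp
  have "m \<le> (Sf Ks r \<mu> T a n + real n * \<mu> a) / real n + sqrt (4 * ln (real t) / real n)"
    using ge index_formula[OF assms(1-4), of \<mu>] by simp
  then have "real n * m \<le> Sf Ks r \<mu> T a n + real n * \<mu> a + real n * sqrt (4 * ln (real t) / real n)"
    using assms(4) by (simp add: field_simps)
  then show ?thesis using sqrt_div_aux[OF assms(4) L] by (simp add: algebra_simps)
qed

lemma prod_list_pos: "\<forall>i<length (Ks::nat list). 1 \<le> Ks!i \<Longrightarrow> prod_list Ks \<ge> 1"
proof (induction Ks)
  case Nil then show ?case by simp
next
  case (Cons k Ks)
  then have "k \<ge> 1" "\<forall>i<length Ks. 1 \<le> Ks!i" by (force, force)
  then show ?case using Cons by simp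
qed

lemma ucb_phase:
  assumes Kpos: "\<forall>i<length Ks. 1 \<le> Ks!i" and "prod_list Ks \<le> t"
  shows "mucb_action Ks r (Suc t) = ucb_best Ks r (mucb_hist Ks r t)"
  using assms by (simp add: mucb_action_def next_tuple_eq[OF Kpos])

lemma round_key:
  assumes Kpos: "\<forall>i<length Ks. 1 \<le> Ks!i" and t: "prod_list Ks \<le> t" "t < T"
    and astar: "astar \<in> arm_tuples Ks"
    and noE: "\<forall>n\<in>{1..t}. Sf Ks r \<mu> T astar n \<ge> - sqrt (4 * real n * ln (real t))"
    and a: "a = mucb_action Ks r (Suc t)"
  shows "cntS (mucb_action Ks r) a t = 0 \<or>
     Sf Ks r \<mu> T a (cntS (mucb_action Ks r) a t) \<ge>
        real (cntS (mucb_action Ks r) a t) * (\<mu> astar - \<mu> a) - sqrt (4 * real (cntS (mucb_action Ks r) a t) * ln (real T))"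
proof (cases "cntS (mucb_action Ks r) a t = 0")
  case True then show ?thesis by simp
next
  case False
  define n where "n = cntS (mucb_action Ks r) a t"
  have n: "n \<ge> 1" using False by (simp add: n_def)
  have t1: "t \<ge> 1" using prod_list_pos[OF Kpos] t by simp
  have ne: "arm_tuples Ks \<noteq> {}" using arm_tuples_ne[OF Kpos] by auto
  have best: "a = ucb_best Ks r (mucb_hist Ks r t)" using a ucb_phase[OF Kpos t(1)] by simp
  have "ucb_index r (mucb_hist Ks r t) astar \<le> ucb_index r (mucb_hist Ks r t) a"
    using ucb_best_spec[OF ne, where r=r and h="mucb_hist Ks r t"] astar best by auto
  moreover have "ereal (\<mu> astar) \<le> ucb_index r (mucb_hist Ks r t) astar"
    by (rule opt_index_ge[OF t1 _ noE]) (use t in simp)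
  ultimately have "ereal (\<mu> astar) \<le> ucb_index r (mucb_hist Ks r t) a" by simp
  then have "Sf Ks r \<mu> T a n \<ge> real n * (\<mu> astar - \<mu> a) - sqrt (4 * real n * ln (real t))"
    by (intro index_ge_imp[OF t1 _ n_def[symmetric] n]) (use t in simp)
  moreover have "sqrt (4 * real n * ln (real t)) \<le> sqrt (4 * real n * ln (real T))"
    using t t1 by (intro real_sqrt_le_mono mult_left_mono) auto
  ultimately have "Sf Ks r \<mu> T a n \<ge> real n * (\<mu> astar - \<mu> a) - sqrt (4 * real n * ln (real T))"
    by linarith
  then show ?thesis unfolding n_def by simp
qed

lemma sum_ind_card: "finite I \<Longrightarrow> (\<Sum>t\<in>I. if P t then 1 else 0::real) = real (card {t\<in>I. P t})"
  by (simp add: sum.If_cases Int_def)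

lemma bad_count:
  assumes Kpos: "\<forall>i<length Ks. 1 \<le> Ks!i" and astar: "astar \<in> arm_tuples Ks"
  shows "card {t\<in>{prod_list Ks..<T}. mucb_action Ks r (Suc t) = a \<and>
            \<not> (\<exists>n\<in>{1..t}. Sf Ks r \<mu> T astar n < - sqrt (4 * real n * ln (real t)))}
      \<le> 1 + card {n\<in>{1..T}. Sf Ks r \<mu> T a n \<ge> real n * (\<mu> astar - \<mu> a) - sqrt (4 * real n * ln (real T))}"
proof -
  let ?A = "mucb_action Ks r"
  let ?G = "{t\<in>{prod_list Ks..<T}. ?A (Suc t) = a \<and>
            \<not> (\<exists>n\<in>{1..t}. Sf Ks r \<mu> T astar n < - sqrt (4 * real n * ln (real t)))}"
  let ?N = "{n\<in>{1..T}. Sf Ks r \<mu> T a n \<ge> real n * (\<mu> astar - \<mu> a) - sqrt (4 * real n * ln (real T))}"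
  have inj: "inj_on (cntS ?A a) ?G"
    by (rule inj_on_subset[OF cntS_inj]) auto
  have sub: "cntS ?A a ` ?G \<subseteq> insert 0 ?N"
  proof
    fix x assume "x \<in> cntS ?A a ` ?G"
    then obtain t where t: "t \<in> ?G" "x = cntS ?A a t" by auto
    have noE: "\<forall>n\<in>{1..t}. Sf Ks r \<mu> T astar n \<ge> - sqrt (4 * real n * ln (real t))"
      using t by (auto simp: not_less)
    have "x = 0 \<or> Sf Ks r \<mu> T a x \<ge> real x * (\<mu> astar - \<mu> a) - sqrt (4 * real x * ln (real T))"
      using round_key[OF Kpos _ _ astar noE, of a] t by auto
    moreover have "x \<le> T" using t cntS_le[of ?A a t] by auto
    ultimately show "x \<in> insert 0 ?N" by auto
  qed
  have "card ?G \<le> card (insert 0 ?N)" by (rule card_inj_on_le[OF inj sub]) simp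
  also have "\<dots> \<le> 1 + card ?N" by (simp add: card_insert_if)
  finally show ?thesis .
qed

lemma pathwise:
  assumes Kpos: "\<forall>i<length Ks. 1 \<le> Ks!i" and astar: "astar \<in> arm_tuples Ks"
    and D01: "\<forall>b\<in>arm_tuples Ks. 0 \<le> \<mu> astar - \<mu> b \<and> \<mu> astar - \<mu> b \<le> 1"
    and eps: "\<epsilon> \<ge> 0"
  shows "(\<Sum>t\<in>{1..T}. \<mu> astar - \<mu> (mucb_action Ks r t)) \<le> real (prod_list Ks) + \<epsilon> * real T
     + (\<Sum>t\<in>{prod_list Ks..<T}. \<Sum>n\<in>{1..t}. if Sf Ks r \<mu> T astar n < - sqrt (4 * real n * ln (real t)) then 1 else 0)
     + (\<Sum>a\<in>{a\<in>arm_tuples Ks. \<mu> astar - \<mu> a > \<epsilon>}. (\<mu> astar - \<mu> a) *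
          (1 + (\<Sum>n\<in>{1..T}. if Sf Ks r \<mu> T a n \<ge> real n * (\<mu> astar - \<mu> a) - sqrt (4 * real n * ln (real T)) then 1 else 0)))"
proof -
  define K where "K = prod_list Ks"
  define A where "A = mucb_action Ks r"
  define \<Delta> where "\<Delta> = (\<lambda>b. \<mu> astar - \<mu> b)"
  define Bad where "Bad = {a\<in>arm_tuples Ks. \<Delta> a > \<epsilon>}"
  define D where "D = (\<lambda>t n. Sf Ks r \<mu> T astar n < - sqrt (4 * real n * ln (real t)))"
  define E where "E = (\<lambda>t. \<exists>n\<in>{1..t}. D t n)"
  define B where "B = (\<lambda>a n. Sf Ks r \<mu> T a n \<ge> real n * (\<mu> astar - \<mu> a) - sqrt (4 * real n * ln (real T)))"
  have AS: "A t \<in> arm_tuples Ks" for t unfolding A_def by (rule mucb_action_in[OF Kpos])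
  have finBad: "finite Bad" unfolding Bad_def using arm_tuples_finite by simp
  have split: "{1..T} = {t\<in>{1..T}. t \<le> K} \<union> Suc ` {K..<T}" by (auto simp: image_iff)
  have disj: "{t\<in>{1..T}. t \<le> K} \<inter> Suc ` {K..<T} = {}" by auto
  have "(\<Sum>t\<in>{1..T}. \<Delta> (A t)) = (\<Sum>t\<in>{t\<in>{1..T}. t \<le> K}. \<Delta> (A t)) + (\<Sum>t\<in>Suc ` {K..<T}. \<Delta> (A t))"
    by (subst split, rule sum.union_disjoint) (use disj in auto)
  also have "(\<Sum>t\<in>Suc ` {K..<T}. \<Delta> (A t)) = (\<Sum>t\<in>{K..<T}. \<Delta> (A (Suc t)))"
    by (subst sum.reindex) auto
  also have "(\<Sum>t\<in>{t\<in>{1..T}. t \<le> K}. \<Delta> (A t)) \<le> real K"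
  proof -
    have "(\<Sum>t\<in>{t\<in>{1..T}. t \<le> K}. \<Delta> (A t)) \<le> of_nat (card {t\<in>{1..T}. t \<le> K}) * 1"
      by (rule sum_bounded_above) (use D01 AS in \<open>auto simp: \<Delta>_def\<close>)
    also have "card {t\<in>{1..T}. t \<le> K} \<le> card {1..K}" by (rule card_mono) auto
    finally show ?thesis by simp
  qed
  also have "(\<Sum>t\<in>{K..<T}. \<Delta> (A (Suc t))) \<le>
       (\<Sum>t\<in>{K..<T}. \<epsilon> + (\<Sum>n\<in>{1..t}. if D t n then 1 else 0) + (\<Sum>a\<in>Bad. \<Delta> a * (if A (Suc t) = a \<and> \<not> E t then 1 else 0)))"
  proof (rule sum_mono)
    fix t assume t: "t \<in> {K..<T}"
    have nn1: "0 \<le> (\<Sum>n\<in>{1..t}. if D t n then 1 else 0::real)" by (rule sum_nonneg) auto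
    have nn2: "0 \<le> (\<Sum>a\<in>Bad. \<Delta> a * (if A (Suc t) = a \<and> \<not> E t then 1 else 0))"
      by (rule sum_nonneg) (use D01 in \<open>auto simp: Bad_def \<Delta>_def\<close>)
    show "\<Delta> (A (Suc t)) \<le> \<epsilon> + (\<Sum>n\<in>{1..t}. if D t n then 1 else 0) + (\<Sum>a\<in>Bad. \<Delta> a * (if A (Suc t) = a \<and> \<not> E t then 1 else 0))"
    proof (cases "\<Delta> (A (Suc t)) \<le> \<epsilon>")
      case True then show ?thesis using nn1 nn2 by linarith
    next
      case False
      then have bad: "A (Suc t) \<in> Bad" using AS by (auto simp: Bad_def)
      show ?thesis
      proof (cases "E t")
        case True
        then obtain n where n: "n \<in> {1..t}" "D t n" by (auto simp: E_def)
        have "1 \<le> (\<Sum>n\<in>{1..t}. if D t n then 1 else 0::real)"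
          using member_le_sum[of n "{1..t}" "\<lambda>n. if D t n then 1 else 0::real"] n by auto
        moreover have "\<Delta> (A (Suc t)) \<le> 1" using D01 AS by (auto simp: \<Delta>_def)
        ultimately show ?thesis using nn2 eps by linarith
      next
        case False
        have "\<Delta> (A (Suc t)) * (if A (Suc t) = A (Suc t) \<and> \<not> E t then 1 else 0) \<le> (\<Sum>a\<in>Bad. \<Delta> a * (if A (Suc t) = a \<and> \<not> E t then 1 else 0))"
          by (rule member_le_sum[OF bad _ finBad]) (use D01 in \<open>auto simp: Bad_def \<Delta>_def\<close>)
        then show ?thesis using False nn1 eps by simp
      qed
    qed
  qed
  also have "\<dots> = real (T - K) * \<epsilon> + (\<Sum>t\<in>{K..<T}. \<Sum>n\<in>{1..t}. if D t n then 1 else 0)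
       + (\<Sum>a\<in>Bad. \<Delta> a * (\<Sum>t\<in>{K..<T}. if A (Suc t) = a \<and> \<not> E t then 1 else 0))"
    by (simp add: sum.distrib sum_distrib_left sum.swap[of _ Bad])
  also have "(\<Sum>a\<in>Bad. \<Delta> a * (\<Sum>t\<in>{K..<T}. if A (Suc t) = a \<and> \<not> E t then 1 else 0)) \<le>
       (\<Sum>a\<in>Bad. \<Delta> a * (1 + (\<Sum>n\<in>{1..T}. if B a n then 1 else 0)))"
  proof (rule sum_mono)
    fix a assume a: "a \<in> Bad"
    have "(\<Sum>t\<in>{K..<T}. if A (Suc t) = a \<and> \<not> E t then 1 else 0::real) = real (card {t\<in>{K..<T}. A (Suc t) = a \<and> \<not> E t})"
      by (rule sum_ind_card) simp
    also have "\<dots> \<le> real (1 + card {n\<in>{1..T}. B a n})"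
      using bad_count[OF Kpos astar, of T r a \<mu>] unfolding K_def A_def E_def D_def B_def by simp
    also have "\<dots> = 1 + (\<Sum>n\<in>{1..T}. if B a n then 1 else 0)" using sum_ind_card[of "{1..T}" "B a"] by simp
    finally show "\<Delta> a * (\<Sum>t\<in>{K..<T}. if A (Suc t) = a \<and> \<not> E t then 1 else 0) \<le> \<Delta> a * (1 + (\<Sum>n\<in>{1..T}. if B a n then 1 else 0))"
      by (rule mult_left_mono) (use a D01 in \<open>auto simp: Bad_def \<Delta>_def\<close>)
  qed
  finally have "(\<Sum>t\<in>{1..T}. \<Delta> (A t)) \<le> real K + (real (T - K) * \<epsilon> + (\<Sum>t\<in>{K..<T}. \<Sum>n\<in>{1..t}. if D t n then 1 else 0)
       + (\<Sum>a\<in>Bad. \<Delta> a * (1 + (\<Sum>n\<in>{1..T}. if B a n then 1 else 0))))" by simp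
  moreover have "real (T - K) * \<epsilon> \<le> \<epsilon> * real T" using eps by (simp add: mult.commute mult_left_mono)
  ultimately show ?thesis unfolding K_def A_def \<Delta>_def Bad_def D_def B_def by simp
qed




lemma (in prob_space) indep_var_nn_integral:
  fixes X1 X2 :: "'a \<Rightarrow> real"
  assumes "indep_var borel X1 borel X2" "\<And>\<omega>. 0 \<le> X1 \<omega>" "\<And>\<omega>. 0 \<le> X2 \<omega>"
  shows "(\<integral>\<^sup>+\<omega>. ennreal (X1 \<omega> * X2 \<omega>) \<partial>M) = (\<integral>\<^sup>+\<omega>. ennreal (X1 \<omega>) \<partial>M) * (\<integral>\<^sup>+\<omega>. ennreal (X2 \<omega>) \<partial>M)"
proof -
  have *: "(\<lambda>\<omega>. X1 \<omega> * X2 \<omega>) = (\<lambda>\<omega>. \<Prod>i\<in>UNIV. (case_bool X1 X2 i \<omega>))"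
    by (simp add: UNIV_bool mult.commute)
  have **: "(\<lambda> _. borel) = case_bool borel borel"
    by (rule ext, metis (full_types) bool.simps(3) bool.simps(4))
  have iv: "indep_var borel (\<lambda>\<omega>. ennreal (X1 \<omega>)) borel (\<lambda>\<omega>. ennreal (X2 \<omega>))"
    using indep_var_compose[OF assms(1), of ennreal borel ennreal borel] by (simp add: comp_def)
  have ind: "indep_vars (\<lambda>_. borel) (case_bool (\<lambda>\<omega>. ennreal (X1 \<omega>)) (\<lambda>\<omega>. ennreal (X2 \<omega>))) UNIV"
    using iv unfolding indep_var_def by (subst **)
  have "(\<integral>\<^sup>+\<omega>. ennreal (X1 \<omega> * X2 \<omega>) \<partial>M) = (\<integral>\<^sup>+\<omega>. (\<Prod>i\<in>UNIV. (case_bool (\<lambda>\<omega>. ennreal (X1 \<omega>)) (\<lambda>\<omega>. ennreal (X2 \<omega>)) i \<omega>)) \<partial>M)"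
    using assms(2,3) by (simp add: UNIV_bool mult.commute ennreal_mult)
  also have "\<dots> = (\<Prod>i\<in>UNIV. \<integral>\<^sup>+\<omega>. (case_bool (\<lambda>\<omega>. ennreal (X1 \<omega>)) (\<lambda>\<omega>. ennreal (X2 \<omega>)) i \<omega>) \<partial>M)"
    by (rule indep_vars_nn_integral[OF _ ind]) auto
  also have "\<dots> = (\<integral>\<^sup>+\<omega>. ennreal (X1 \<omega>) \<partial>M) * (\<integral>\<^sup>+\<omega>. ennreal (X2 \<omega>) \<partial>M)"
    by (simp add: UNIV_bool mult.commute)
  finally show ?thesis .
qed

lemma component_meas:
  fixes a :: 'b and S :: "'b set"
  shows "(\<lambda>w. w s a) \<in> borel_measurable (PiM I (\<lambda>_. PiM S (\<lambda>_. (borel :: real measure))))"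
proof (cases "s \<in> I")
  case True
  note sI = this
  show ?thesis
  proof (cases "a \<in> S")
    case True
    have "(\<lambda>w. w s) \<in> measurable (PiM I (\<lambda>_. PiM S (\<lambda>_. borel))) (PiM S (\<lambda>_. (borel :: real measure)))"
      using sI by measurable
    then show ?thesis using True by measurable
  next
    case False
    have "(\<lambda>w. undefined) \<in> borel_measurable (PiM I (\<lambda>_. PiM S (\<lambda>_. (borel :: real measure))))" by simp
    then show ?thesis
      apply (subst measurable_cong[where g="\<lambda>w. undefined"])
      using sI False apply (auto simp: space_PiM PiE_def extensional_def Pi_def)
      done
  qed
next
  case False
  have "(\<lambda>w. (undefined :: 'b \<Rightarrow> real) a) \<in> borel_measurable (PiM I (\<lambda>_. PiM S (\<lambda>_. (borel :: real measure))))" by simp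
  then show ?thesis
    apply (subst measurable_cong[where g="\<lambda>w. (undefined :: 'b \<Rightarrow> real) a"])
    using False apply (auto simp: space_PiM PiE_def extensional_def)
    done
qed

locale bandit =
  fixes Ks :: "nat list" and P :: "'w measure" and X :: "nat list \<Rightarrow> nat \<Rightarrow> 'w \<Rightarrow> real"
    and F :: "nat list \<Rightarrow> real measure"
  assumes Kpos: "\<forall>i<length Ks. 1 \<le> Ks!i"
    and prob: "prob_space P"
    and meas: "\<And>a t. a \<in> arm_tuples Ks \<Longrightarrow> X a t \<in> borel_measurable P"
    and distr: "\<And>a t. a \<in> arm_tuples Ks \<Longrightarrow> distr P borel (X a t) = F a"
    and indep: "prob_space.indep_vars P (\<lambda>_. PiM (arm_tuples Ks) (\<lambda>_. borel))
                  (\<lambda>t \<omega>. restrict (\<lambda>a. X a t \<omega>) (arm_tuples Ks)) UNIV"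
    and supp: "\<And>a. a \<in> arm_tuples Ks \<Longrightarrow> AE x in F a. x \<in> {0..1}"
begin

interpretation P: prob_space P by (rule prob)

abbreviation "S \<equiv> arm_tuples Ks"

definition rr :: "'w \<Rightarrow> nat list \<Rightarrow> nat \<Rightarrow> real" where
  "rr \<omega> a s = (if a \<in> S then X a s \<omega> else 0)"

definition \<mu> :: "nat list \<Rightarrow> real" where
  "\<mu> a = (\<integral>x. x \<partial>F a)"

abbreviation PS :: "nat \<Rightarrow> (nat \<Rightarrow> nat list \<Rightarrow> real) measure" where
  "PS t \<equiv> PiM {..t} (\<lambda>_. PiM S (\<lambda>_. borel))"

definition W :: "nat \<Rightarrow> 'w \<Rightarrow> nat \<Rightarrow> nat list \<Rightarrow> real" where
  "W t \<omega> = restrict (\<lambda>s. restrict (\<lambda>a. X a s \<omega>) S) {..t}"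

definition rW :: "(nat \<Rightarrow> nat list \<Rightarrow> real) \<Rightarrow> nat list \<Rightarrow> nat \<Rightarrow> real" where
  "rW w a s = w s a"

lemma rr_meas[measurable]: "(\<lambda>\<omega>. rr \<omega> a s) \<in> borel_measurable P"
  unfolding rr_def by (cases "a \<in> S") (auto intro: meas)

lemma rW_meas[measurable]: "(\<lambda>w. rW w a s) \<in> borel_measurable (PS t)"
  unfolding rW_def by (rule component_meas)

lemma W_meas[measurable]: "W t \<in> measurable P (PS t)"
  unfolding W_def using meas by measurable

lemma rW_W_agree: "\<forall>b\<in>S. \<forall>s\<in>{1..t}. rW (W t \<omega>) b s = rr \<omega> b s"
  by (auto simp: rW_def W_def rr_def)

lemma rW_W_agree': "\<forall>b\<in>S. \<forall>s\<in>{1..t}. rr \<omega> b s = rW (W t \<omega>) b s"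
  using rW_W_agree by simp

lemma F_prob: "a \<in> S \<Longrightarrow> prob_space (F a)"
  using P.prob_space_distr[OF meas, of a 0] distr[of a 0] by simp

lemma sets_F: "a \<in> S \<Longrightarrow> sets (F a) = sets borel"
  using distr[of a 0] by (metis sets_distr)

lemma X_in_01: "a \<in> S \<Longrightarrow> AE \<omega> in P. X a t \<omega> \<in> {0..1}"
proof -
  assume a: "a \<in> S"
  have "AE x in distr P borel (X a t). x \<in> {0..1}" unfolding distr[OF a] by (rule supp[OF a])
  then show ?thesis by (subst (asm) AE_distr_iff[OF meas[OF a]]) auto
qed

lemma mF:
  fixes f :: "real \<Rightarrow> 'c::topological_space"
  shows "a \<in> S \<Longrightarrow> f \<in> borel_measurable borel \<Longrightarrow> f \<in> borel_measurable (F a)"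
proof -
  assume a: "a \<in> S" and f: "f \<in> borel_measurable borel"
  have "measurable (F a) borel = measurable borel (borel :: 'c measure)"
    by (rule measurable_cong_sets[OF sets_F[OF a] refl])
  then show ?thesis using f by simp
qed

lemma int_bounded: "a \<in> S \<Longrightarrow> sg \<in> {1, -1} \<Longrightarrow>
   interval_bounded_random_variable (F a) (\<lambda>x. sg * x) (min 0 sg) (max 0 sg)"
proof -
  assume a: "a \<in> S" and sg: "sg \<in> {1, -1}"
  have "(\<lambda>x. sg * x) \<in> borel_measurable (F a)" by (rule mF[OF a]) simp
  moreover have "AE x in F a. sg * x \<in> {min 0 sg..max 0 sg}"
    using supp[OF a] by eventually_elim (use sg in auto)
  ultimately show ?thesis
    unfolding interval_bounded_random_variable_def interval_bounded_random_variable_axioms_def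
    using F_prob[OF a] by simp
qed

lemma F_integrable: "a \<in> S \<Longrightarrow> integrable (F a) (\<lambda>x. x)"
  using interval_bounded_random_variable.integrable[OF int_bounded[of a 1]] by simp

lemma mu_01: "a \<in> S \<Longrightarrow> 0 \<le> \<mu> a \<and> \<mu> a \<le> 1"
proof -
  assume a: "a \<in> S"
  interpret Fa: prob_space "F a" by (rule F_prob[OF a])
  have "0 \<le> \<mu> a" unfolding \<mu>_def
    by (rule integral_nonneg_AE) (use supp[OF a] in \<open>auto elim: eventually_mono\<close>)
  moreover have "\<mu> a \<le> (\<integral>x. 1 \<partial>F a)" unfolding \<mu>_def
    by (rule integral_mono_AE) (use supp[OF a] F_integrable[OF a] in \<open>auto elim: eventually_mono\<close>)
  ultimately show ?thesis by (simp add: Fa.prob_space)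
qed

lemma hoeff:
  assumes a: "a \<in> S" and sg: "sg \<in> {1, -1}" and l: "l > 0"
  shows "(\<integral>\<^sup>+x. ennreal (exp (l * (sg * (x - \<mu> a)) - l\<^sup>2 / 8)) \<partial>F a) \<le> 1"
proof -
  interpret Fa: prob_space "F a" by (rule F_prob[OF a])
  have E: "(\<integral>x. sg * x \<partial>F a) = sg * \<mu> a" by (simp add: \<mu>_def)
  have ab: "(max 0 sg - min 0 sg)\<^sup>2 = 1" using sg by auto
  have H: "(\<integral>\<^sup>+x. ennreal (exp (l * (sg * x - sg * \<mu> a))) \<partial>F a) \<le> ennreal (exp (l\<^sup>2 / 8))"
    using interval_bounded_random_variable.Hoeffdings_lemma_nn_integral[OF int_bounded[OF a sg] l]
    unfolding E ab by simp
  have "(\<integral>\<^sup>+x. ennreal (exp (l * (sg * (x - \<mu> a)) - l\<^sup>2 / 8)) \<partial>F a)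
      = (\<integral>\<^sup>+x. ennreal (exp (l * (sg * x - sg * \<mu> a))) * ennreal (exp (- (l\<^sup>2 / 8))) \<partial>F a)"
  proof (intro nn_integral_cong)
    fix x
    have "exp (l * (sg * (x - \<mu> a)) - l\<^sup>2 / 8) = exp (l * (sg * x - sg * \<mu> a)) * exp (- (l\<^sup>2 / 8))"
      by (simp add: exp_add[symmetric] algebra_simps)
    then show "ennreal (exp (l * (sg * (x - \<mu> a)) - l\<^sup>2 / 8)) = ennreal (exp (l * (sg * x - sg * \<mu> a))) * ennreal (exp (- (l\<^sup>2 / 8)))"
      by (simp add: ennreal_mult)
  qed
  also have "\<dots> = (\<integral>\<^sup>+x. ennreal (exp (l * (sg * x - sg * \<mu> a))) \<partial>F a) * ennreal (exp (- (l\<^sup>2 / 8)))"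
    by (rule nn_integral_multc, rule mF[OF a]) simp
  also have "\<dots> \<le> ennreal (exp (l\<^sup>2 / 8)) * ennreal (exp (- (l\<^sup>2 / 8)))"
    by (rule mult_right_mono[OF H]) simp
  also have "\<dots> = 1" by (simp add: ennreal_mult'[symmetric] exp_minus)
  finally show ?thesis .
qed

lemma indep_past:
  assumes a: "a \<in> S" and f[measurable]: "f \<in> borel_measurable (PS t)" and g[measurable]: "g \<in> borel_measurable borel"
  shows "P.indep_var borel (\<lambda>\<omega>. f (W t \<omega>)) borel (\<lambda>\<omega>. g (X a (Suc t) \<omega>))"
proof -
  have iv: "P.indep_var (PS t) (W t) (PiM {Suc t} (\<lambda>_. PiM S (\<lambda>_. borel)))
            (\<lambda>\<omega>. restrict (\<lambda>i. restrict (\<lambda>a. X a i \<omega>) S) {Suc t})"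
    unfolding W_def by (rule P.indep_var_restrict[OF indep]) auto
  have m2: "(\<lambda>v. g (v (Suc t) a)) \<in> borel_measurable (PiM {Suc t} (\<lambda>_. PiM S (\<lambda>_. (borel :: real measure))))"
  proof -
    have "(\<lambda>v. v (Suc t) a) \<in> borel_measurable (PiM {Suc t} (\<lambda>_. PiM S (\<lambda>_. (borel :: real measure))))"
      by (rule component_meas)
    then show ?thesis by measurable
  qed
  have "P.indep_var borel (f \<circ> W t) borel ((\<lambda>v. g (v (Suc t) a)) \<circ> (\<lambda>\<omega>. restrict (\<lambda>i. restrict (\<lambda>a. X a i \<omega>) S) {Suc t}))"
    by (rule P.indep_var_compose[OF iv f m2])
  moreover have "(\<lambda>v. g (v (Suc t) a)) \<circ> (\<lambda>\<omega>. restrict (\<lambda>i. restrict (\<lambda>a. X a i \<omega>) S) {Suc t}) = (\<lambda>\<omega>. g (X a (Suc t) \<omega>))"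
    using a by (auto simp: fun_eq_iff)
  ultimately show ?thesis by (simp add: comp_def)
qed

lemma indep_nn:
  assumes a: "a \<in> S" and f[measurable]: "f \<in> borel_measurable (PS t)" and g[measurable]: "g \<in> borel_measurable borel"
    and "\<And>w. 0 \<le> f w" "\<And>x. 0 \<le> g x"
  shows "(\<integral>\<^sup>+\<omega>. ennreal (f (W t \<omega>) * g (X a (Suc t) \<omega>)) \<partial>P) =
         (\<integral>\<^sup>+\<omega>. ennreal (f (W t \<omega>)) \<partial>P) * (\<integral>\<^sup>+x. ennreal (g x) \<partial>F a)"
proof -
  have "(\<integral>\<^sup>+\<omega>. ennreal (g (X a (Suc t) \<omega>)) \<partial>P) = (\<integral>\<^sup>+x. ennreal (g x) \<partial>F a)"
  proof -
    have "(\<integral>\<^sup>+x. ennreal (g x) \<partial>distr P borel (X a (Suc t))) = (\<integral>\<^sup>+\<omega>. ennreal (g (X a (Suc t) \<omega>)) \<partial>P)"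
      by (rule nn_integral_distr) (use meas[OF a] in auto)
    then show ?thesis using distr[OF a, of "Suc t"] by simp
  qed
  then show ?thesis using P.indep_var_nn_integral[OF indep_past[OF a f g]] assms by simp
qed

end




definition selR :: "nat list \<Rightarrow> (nat list \<Rightarrow> nat \<Rightarrow> real) \<Rightarrow> nat list \<Rightarrow> nat \<Rightarrow> nat \<Rightarrow> bool" where
  "selR Ks r a n s \<longleftrightarrow> mucb_action Ks r s = a \<and> cntS (mucb_action Ks r) a (s - 1) < n"

definition ZR :: "nat list \<Rightarrow> (nat list \<Rightarrow> nat \<Rightarrow> real) \<Rightarrow> (nat list \<Rightarrow> real) \<Rightarrow> nat list \<Rightarrow> nat \<Rightarrow> real \<Rightarrow> real \<Rightarrow> nat \<Rightarrow> real" where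
  "ZR Ks r \<mu> a n l sg t = (\<Prod>s\<in>{1..t}. if selR Ks r a n s then exp (l * (sg * (r a s - \<mu> a)) - l\<^sup>2 / 8) else 1)"

lemma mucb_action_hist: "mucb_action Ks r s = last (mucb_hist Ks r (Suc (s - 1)))"
  by (simp add: mucb_action_def)

lemma selR_hist: "selR Ks r a n s \<longleftrightarrow> last (mucb_hist Ks r (Suc (s - 1))) = a \<and> play_count (mucb_hist Ks r (s - 1)) a < n"
  unfolding selR_def by (simp add: play_count_hist mucb_action_def)

lemma selR_local:
  assumes "\<forall>b\<in>arm_tuples Ks. \<forall>s'\<in>{1..s - 1}. r b s' = r' b s'"
  shows "selR Ks r a n s = selR Ks r' a n s"
proof -
  have "mucb_hist Ks r (s - 1) = mucb_hist Ks r' (s - 1)" by (rule mucb_hist_local[OF assms])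
  moreover have "mucb_action Ks r s = mucb_action Ks r' s" by (rule mucb_action_local[OF assms])
  ultimately show ?thesis unfolding selR_def by (simp add: play_count_hist[symmetric])
qed

lemma ZR_local:
  assumes "a \<in> arm_tuples Ks" "\<forall>b\<in>arm_tuples Ks. \<forall>s\<in>{1..t}. r b s = r' b s"
  shows "ZR Ks r \<mu> a n l sg t = ZR Ks r' \<mu> a n l sg t"
  unfolding ZR_def
proof (rule prod.cong[OF refl])
  fix s assume s: "s \<in> {1..t}"
  have "selR Ks r a n s = selR Ks r' a n s" by (rule selR_local) (use assms(2) s in auto)
  moreover have "r a s = r' a s" using assms s by auto
  ultimately show "(if selR Ks r a n s then exp (l * (sg * (r a s - \<mu> a)) - l\<^sup>2 / 8) else 1) =
        (if selR Ks r' a n s then exp (l * (sg * (r' a s - \<mu> a)) - l\<^sup>2 / 8) else 1)" by simp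
qed

lemma hist_pred:
  assumes Kpos: "\<forall>i<length Ks. 1 \<le> Ks!i"
  assumes "\<And>a s. (\<lambda>x. r x a s) \<in> borel_measurable M"
  shows "Measurable.pred M (\<lambda>x. Q (mucb_hist Ks (r x) t))"
proof -
  have "(\<lambda>x. mucb_hist Ks (r x) t) -` {h. Q h} \<inter> space M \<in> sets M"
    by (rule measurable_sets[OF mucb_hist_meas[OF assms]]) simp
  moreover have "{x\<in>space M. Q (mucb_hist Ks (r x) t)} = (\<lambda>x. mucb_hist Ks (r x) t) -` {h. Q h} \<inter> space M" by auto
  ultimately show ?thesis unfolding pred_def by simp
qed

lemma selR_pred:
  assumes Kpos: "\<forall>i<length Ks. 1 \<le> Ks!i"
  assumes "\<And>a s. (\<lambda>x. r x a s) \<in> borel_measurable M"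
  shows "Measurable.pred M (\<lambda>x. selR Ks (r x) a n s)"
proof -
  have [measurable]: "Measurable.pred M (\<lambda>x. last (mucb_hist Ks (r x) (Suc (s - 1))) = a)"
    by (rule hist_pred[OF assms])
  have [measurable]: "Measurable.pred M (\<lambda>x. play_count (mucb_hist Ks (r x) (s - 1)) a < n)"
    by (rule hist_pred[OF assms])
  show ?thesis unfolding selR_hist by measurable
qed

lemma ZR_meas:
  assumes Kpos: "\<forall>i<length Ks. 1 \<le> Ks!i"
  assumes [measurable]: "\<And>a s. (\<lambda>x. r x a s) \<in> borel_measurable M"
  shows "(\<lambda>x. ZR Ks (r x) \<mu> a n l sg t) \<in> borel_measurable M"
proof -
  have [measurable]: "Measurable.pred M (\<lambda>x. selR Ks (r x) a n s)" for s
    by (rule selR_pred[OF assms])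
  show ?thesis unfolding ZR_def by measurable
qed

lemma Sf_sum: "Sf Ks r \<mu> T a n = (\<Sum>s\<in>{1..T}. if selR Ks r a n s then r a s - \<mu> a else 0)"
  unfolding Sf_def selR_def by (rule sum.inter_filter) simp

lemma Sf_meas:
  assumes Kpos: "\<forall>i<length Ks. 1 \<le> Ks!i"
  assumes [measurable]: "\<And>a s. (\<lambda>x. r x a s) \<in> borel_measurable M"
  shows "(\<lambda>x. Sf Ks (r x) \<mu> T a n) \<in> borel_measurable M"
proof -
  have [measurable]: "Measurable.pred M (\<lambda>x. selR Ks (r x) a n s)" for s
    by (rule selR_pred[OF assms])
  show ?thesis unfolding Sf_sum by measurable
qed

lemma ZR_ge:
  assumes l: "l > 0"
  shows "ZR Ks r \<mu> a n l sg T \<ge> exp (l * (sg * Sf Ks r \<mu> T a n) - l\<^sup>2 / 8 * real n)"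
proof -
  let ?Sel = "{s\<in>{1..T}. selR Ks r a n s}"
  have "ZR Ks r \<mu> a n l sg T = (\<Prod>s\<in>?Sel. exp (l * (sg * (r a s - \<mu> a)) - l\<^sup>2 / 8))"
    unfolding ZR_def by (rule prod.inter_filter[symmetric]) simp
  also have "\<dots> = exp (\<Sum>s\<in>?Sel. l * (sg * (r a s - \<mu> a)) - l\<^sup>2 / 8)"
    by (simp add: exp_sum)
  also have "(\<Sum>s\<in>?Sel. l * (sg * (r a s - \<mu> a)) - l\<^sup>2 / 8) = l * (sg * Sf Ks r \<mu> T a n) - l\<^sup>2 / 8 * real (card ?Sel)"
  proof -
    have "(\<Sum>s\<in>?Sel. l * (sg * (r a s - \<mu> a)) - l\<^sup>2 / 8) = (\<Sum>s\<in>?Sel. l * (sg * (r a s - \<mu> a))) - (\<Sum>s\<in>?Sel. l\<^sup>2 / 8)"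
      by (rule sum_subtractf)
    also have "(\<Sum>s\<in>?Sel. l * (sg * (r a s - \<mu> a))) = l * (sg * (\<Sum>s\<in>?Sel. r a s - \<mu> a))"
      by (simp add: sum_distrib_left)
    also have "(\<Sum>s\<in>?Sel. r a s - \<mu> a) = Sf Ks r \<mu> T a n" unfolding Sf_def selR_def by simp
    finally show ?thesis by simp
  qed
  finally have eq: "ZR Ks r \<mu> a n l sg T = exp (l * (sg * Sf Ks r \<mu> T a n) - l\<^sup>2 / 8 * real (card ?Sel))" .
  have "card ?Sel \<le> n" unfolding selR_def using cntS_first_card by simp
  then have "l\<^sup>2 / 8 * real (card ?Sel) \<le> l\<^sup>2 / 8 * real n" by (intro mult_left_mono) auto
  then show ?thesis unfolding eq by simp
qed

context bandit
begin

interpretation P: prob_space P by (rule prob)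

lemma ZR_step:
  assumes a: "a \<in> S" and sg: "sg \<in> {1, -1}" and l: "l > 0"
  shows "(\<integral>\<^sup>+\<omega>. ennreal (ZR Ks (rr \<omega>) \<mu> a n l sg (Suc t)) \<partial>P) \<le> (\<integral>\<^sup>+\<omega>. ennreal (ZR Ks (rr \<omega>) \<mu> a n l sg t) \<partial>P)"
proof -
  define g where "g = (\<lambda>x. exp (l * (sg * (x - \<mu> a)) - l\<^sup>2 / 8))"
  define f where "f = (\<lambda>w. if selR Ks (rW w) a n (Suc t) then ZR Ks (rW w) \<mu> a n l sg t else 0)"
  define f' where "f' = (\<lambda>w. if selR Ks (rW w) a n (Suc t) then 0 else ZR Ks (rW w) \<mu> a n l sg t)"
  have [measurable]: "Measurable.pred (PS t) (\<lambda>w. selR Ks (rW w) a n (Suc t))"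
    by (rule selR_pred[OF Kpos rW_meas])
  have [measurable]: "(\<lambda>w. ZR Ks (rW w) \<mu> a n l sg t) \<in> borel_measurable (PS t)"
    by (rule ZR_meas[OF Kpos rW_meas])
  have [measurable]: "Measurable.pred P (\<lambda>\<omega>. selR Ks (rr \<omega>) a n (Suc t))"
    by (rule selR_pred[OF Kpos rr_meas])
  have [measurable]: "(\<lambda>\<omega>. ZR Ks (rr \<omega>) \<mu> a n l sg t) \<in> borel_measurable P"
    by (rule ZR_meas[OF Kpos rr_meas])
  have fm[measurable]: "f \<in> borel_measurable (PS t)" unfolding f_def by measurable
  have fm'[measurable]: "f' \<in> borel_measurable (PS t)" unfolding f'_def by measurable
  have gm[measurable]: "g \<in> borel_measurable borel" unfolding g_def by measurable
  have Zpos: "ZR Ks r \<mu> a n l sg t' \<ge> 0" for r t' unfolding ZR_def by (rule prod_nonneg) auto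
  have fpos: "f w \<ge> 0" "f' w \<ge> 0" for w unfolding f_def f'_def using Zpos by auto
  have gpos: "g x \<ge> 0" for x unfolding g_def by simp
  have loc_sel: "selR Ks (rW (W t \<omega>)) a n (Suc t) = selR Ks (rr \<omega>) a n (Suc t)" for \<omega>
    by (rule selR_local) (use rW_W_agree[of t \<omega>] in auto)
  have loc_Z: "ZR Ks (rW (W t \<omega>)) \<mu> a n l sg t = ZR Ks (rr \<omega>) \<mu> a n l sg t" for \<omega>
    by (rule ZR_local[OF a rW_W_agree])
  have decomp: "ZR Ks (rr \<omega>) \<mu> a n l sg (Suc t) = f' (W t \<omega>) + f (W t \<omega>) * g (X a (Suc t) \<omega>)" for \<omega>
  proof -
    have "ZR Ks (rr \<omega>) \<mu> a n l sg (Suc t) = ZR Ks (rr \<omega>) \<mu> a n l sg t *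
        (if selR Ks (rr \<omega>) a n (Suc t) then exp (l * (sg * (rr \<omega> a (Suc t) - \<mu> a)) - l\<^sup>2 / 8) else 1)"
      unfolding ZR_def by (simp add: atLeastAtMostSuc_conv mult.commute)
    then show ?thesis unfolding f_def f'_def g_def loc_sel loc_Z using a by (simp add: rr_def)
  qed
  have m1: "(\<lambda>\<omega>. f' (W t \<omega>)) \<in> borel_measurable P" by (rule measurable_compose[OF W_meas fm'])
  have m2: "(\<lambda>\<omega>. f (W t \<omega>)) \<in> borel_measurable P" by (rule measurable_compose[OF W_meas fm])
  have m3: "(\<lambda>\<omega>. g (X a (Suc t) \<omega>)) \<in> borel_measurable P" by (rule measurable_compose[OF meas[OF a] gm])
  have m4: "(\<lambda>\<omega>. f (W t \<omega>) * g (X a (Suc t) \<omega>)) \<in> borel_measurable P" using m2 m3 by (rule borel_measurable_times)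
  have "(\<integral>\<^sup>+\<omega>. ennreal (ZR Ks (rr \<omega>) \<mu> a n l sg (Suc t)) \<partial>P)
      = (\<integral>\<^sup>+\<omega>. ennreal (f' (W t \<omega>)) + ennreal (f (W t \<omega>) * g (X a (Suc t) \<omega>)) \<partial>P)"
    unfolding decomp using fpos gpos by (intro nn_integral_cong) (simp add: ennreal_plus)
  also have "\<dots> = (\<integral>\<^sup>+\<omega>. ennreal (f' (W t \<omega>)) \<partial>P) + (\<integral>\<^sup>+\<omega>. ennreal (f (W t \<omega>) * g (X a (Suc t) \<omega>)) \<partial>P)"
    by (rule nn_integral_add) (use m1 m4 in simp_all)
  also have "(\<integral>\<^sup>+\<omega>. ennreal (f (W t \<omega>) * g (X a (Suc t) \<omega>)) \<partial>P)
      = (\<integral>\<^sup>+\<omega>. ennreal (f (W t \<omega>)) \<partial>P) * (\<integral>\<^sup>+x. ennreal (g x) \<partial>F a)"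
    by (rule indep_nn[OF a fm gm fpos(1) gpos])
  also have "\<dots> \<le> (\<integral>\<^sup>+\<omega>. ennreal (f (W t \<omega>)) \<partial>P) * 1"
    by (rule mult_left_mono) (use hoeff[OF a sg l] in \<open>simp_all add: g_def\<close>)
  also have "(\<integral>\<^sup>+\<omega>. ennreal (f' (W t \<omega>)) \<partial>P) + (\<integral>\<^sup>+\<omega>. ennreal (f (W t \<omega>)) \<partial>P) * 1
      = (\<integral>\<^sup>+\<omega>. ennreal (f' (W t \<omega>)) + ennreal (f (W t \<omega>)) \<partial>P)"
    by (simp, rule nn_integral_add[symmetric]) (use m1 m2 in simp_all)
  also have "\<dots> = (\<integral>\<^sup>+\<omega>. ennreal (ZR Ks (rr \<omega>) \<mu> a n l sg t) \<partial>P)"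
    by (intro nn_integral_cong) (simp add: f_def f'_def loc_sel loc_Z)
  finally show ?thesis by (simp add: add_left_mono)
qed

lemma ZR_le1:
  assumes a: "a \<in> S" and sg: "sg \<in> {1, -1}" and l: "l > 0"
  shows "(\<integral>\<^sup>+\<omega>. ennreal (ZR Ks (rr \<omega>) \<mu> a n l sg t) \<partial>P) \<le> 1"
proof (induction t)
  case 0
  have "(\<integral>\<^sup>+\<omega>. ennreal (ZR Ks (rr \<omega>) \<mu> a n l sg 0) \<partial>P) = (\<integral>\<^sup>+\<omega>. 1 \<partial>P)"
    by (simp add: ZR_def)
  also have "\<dots> = 1" by (simp add: P.emeasure_space_1)
  finally show ?case by simp
next
  case (Suc t)
  then show ?case using ZR_step[OF a sg l, of n t] by simp
qed

lemma conc:
  assumes a: "a \<in> S" and sg: "sg \<in> {1, -1}" and x: "x > 0" and n: "n \<ge> 1"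
  shows "P.prob {\<omega>\<in>space P. x \<le> sg * Sf Ks (rr \<omega>) \<mu> T a n} \<le> exp (- 2 * x\<^sup>2 / real n)"
proof -
  define l where "l = 4 * x / real n"
  have l: "l > 0" using x n by (simp add: l_def)
  define E where "E = {\<omega>\<in>space P. x \<le> sg * Sf Ks (rr \<omega>) \<mu> T a n}"
  have [measurable]: "(\<lambda>\<omega>. Sf Ks (rr \<omega>) \<mu> T a n) \<in> borel_measurable P"
    by (rule Sf_meas[OF Kpos rr_meas])
  have Em: "E \<in> sets P" unfolding E_def by measurable
  define c where "c = exp (l * x - l\<^sup>2 / 8 * real n)"
  have cpos: "c > 0" by (simp add: c_def)
  have Zpos: "ZR Ks r \<mu> a n l sg t' \<ge> 0" for r t' unfolding ZR_def by (rule prod_nonneg) auto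
  have pt: "ennreal c * indicator E \<omega> \<le> ennreal (ZR Ks (rr \<omega>) \<mu> a n l sg T)" for \<omega>
  proof (cases "\<omega> \<in> E")
    case True
    then have "l * x \<le> l * (sg * Sf Ks (rr \<omega>) \<mu> T a n)" using l by (simp add: E_def)
    then have "c \<le> exp (l * (sg * Sf Ks (rr \<omega>) \<mu> T a n) - l\<^sup>2 / 8 * real n)" by (simp add: c_def)
    also have "\<dots> \<le> ZR Ks (rr \<omega>) \<mu> a n l sg T" by (rule ZR_ge[OF l])
    finally show ?thesis using True by (simp add: ennreal_leI)
  qed simp
  have "ennreal c * emeasure P E = (\<integral>\<^sup>+\<omega>. ennreal c * indicator E \<omega> \<partial>P)"
    by (rule nn_integral_cmult_indicator[OF Em, symmetric])
  also have "\<dots> \<le> (\<integral>\<^sup>+\<omega>. ennreal (ZR Ks (rr \<omega>) \<mu> a n l sg T) \<partial>P)"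
    by (rule nn_integral_mono) (rule pt)
  also have "\<dots> \<le> 1" by (rule ZR_le1[OF a sg l])
  finally have "ennreal c * ennreal (P.prob E) \<le> 1" by (simp add: P.emeasure_eq_measure)
  then have "c * P.prob E \<le> 1" using cpos by (simp add: ennreal_mult[symmetric])
  then have "P.prob E \<le> 1 / c" using cpos by (simp add: field_simps)
  also have "1 / c = exp (- 2 * x\<^sup>2 / real n)"
  proof -
    have "l * x - l\<^sup>2 / 8 * real n = 2 * x\<^sup>2 / real n" using n by (simp add: l_def power2_eq_square field_simps)
    then show ?thesis by (simp add: c_def exp_minus field_simps)
  qed
  finally show ?thesis unfolding E_def .
qed

end




context bandit
begin

interpretation P: prob_space P by (rule prob)

definition act :: "nat \<Rightarrow> 'w \<Rightarrow> nat list" where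
  "act t \<omega> = mucb_action Ks (rr \<omega>) t"

lemma act_in: "act t \<omega> \<in> S"
  unfolding act_def by (rule mucb_action_in[OF Kpos])

lemma act_X: "mucb_action Ks (\<lambda>a s. X a s \<omega>) t = act t \<omega>"
  unfolding act_def by (rule mucb_action_local) (auto simp: rr_def)

lemma act_fun_meas: "(\<lambda>\<omega>. h (act t \<omega>)) \<in> borel_measurable P"
proof -
  have "(\<lambda>\<omega>. (\<lambda>hh. h (last hh)) (mucb_hist Ks (rr \<omega>) (Suc (t - 1)))) \<in> borel_measurable P"
    by (rule hist_fun_meas(2)[OF Kpos rr_meas])
  then show ?thesis by (simp add: act_def mucb_action_def)
qed

lemma act_pred: "Measurable.pred P (\<lambda>\<omega>. Q (act t \<omega>))"
proof -
  have "Measurable.pred P (\<lambda>\<omega>. (\<lambda>hh. Q (last hh)) (mucb_hist Ks (rr \<omega>) (Suc (t - 1))))"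
    by (rule hist_pred[OF Kpos rr_meas])
  then show ?thesis by (simp add: act_def mucb_action_def)
qed

lemma ind_integrable: "Measurable.pred P Q \<Longrightarrow> integrable P (\<lambda>\<omega>. if Q \<omega> then 1 else 0::real)"
  by (rule P.integrable_const_bound[where B=1]) auto

lemma ind_integral: "Measurable.pred P Q \<Longrightarrow> (\<integral>\<omega>. (if Q \<omega> then 1 else 0::real) \<partial>P) = P.prob {\<omega>\<in>space P. Q \<omega>}"
proof -
  assume Q: "Measurable.pred P Q"
  have "(\<integral>\<omega>. (if Q \<omega> then 1 else 0::real) \<partial>P) = (\<integral>\<omega>. indicator {\<omega>\<in>space P. Q \<omega>} \<omega> \<partial>P)"
    by (rule Bochner_Integration.integral_cong[OF refl]) (auto simp: indicator_def)
  also have "\<dots> = P.prob {\<omega>\<in>space P. Q \<omega>}" by (simp add: Int_absorb2)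
  finally show ?thesis .
qed

lemma X_integrable: "a \<in> S \<Longrightarrow> integrable P (X a t)"
proof -
  assume a: "a \<in> S"
  have "integrable (distr P borel (X a t)) (\<lambda>x. x)" using F_integrable[OF a] distr[OF a] by simp
  then show ?thesis using integrable_distr_eq[OF meas[OF a], of "\<lambda>x. x"] by simp
qed

lemma X_integral: "a \<in> S \<Longrightarrow> (\<integral>\<omega>. X a t \<omega> \<partial>P) = \<mu> a"
proof -
  assume a: "a \<in> S"
  have "(\<integral>x. x \<partial>distr P borel (X a t)) = (\<integral>\<omega>. X a t \<omega> \<partial>P)"
    by (rule integral_distr[OF meas[OF a]]) simp
  then show ?thesis using distr[OF a] by (simp add: \<mu>_def)
qed

lemma exp_act_X:
  assumes b: "b \<in> S"
  shows "integrable P (\<lambda>\<omega>. (if act (Suc t) \<omega> = b then 1 else 0) * X b (Suc t) \<omega>)"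
    "(\<integral>\<omega>. (if act (Suc t) \<omega> = b then 1 else 0) * X b (Suc t) \<omega> \<partial>P) = P.prob {\<omega>\<in>space P. act (Suc t) \<omega> = b} * \<mu> b"
proof -
  define f where "f = (\<lambda>w. if mucb_action Ks (rW w) (Suc t) = b then 1 else 0::real)"
  have fm: "f \<in> borel_measurable (PS t)"
  proof -
    have "Measurable.pred (PS t) (\<lambda>w. (\<lambda>hh. last hh = b) (mucb_hist Ks (rW w) (Suc (Suc t - 1))))"
      by (rule hist_pred[OF Kpos rW_meas])
    then have [measurable]: "Measurable.pred (PS t) (\<lambda>w. mucb_action Ks (rW w) (Suc t) = b)"
      by (simp add: mucb_action_def)
    show ?thesis unfolding f_def by measurable
  qed
  have loc: "f (W t \<omega>) = (if act (Suc t) \<omega> = b then 1 else 0)" for \<omega>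
  proof -
    have "mucb_action Ks (rW (W t \<omega>)) (Suc t) = act (Suc t) \<omega>"
      unfolding act_def by (rule mucb_action_local) (use rW_W_agree[of t \<omega>] in auto)
    then show ?thesis by (simp add: f_def)
  qed
  have iv: "P.indep_var borel (\<lambda>\<omega>. f (W t \<omega>)) borel (\<lambda>\<omega>. X b (Suc t) \<omega>)"
    using indep_past[OF b fm, of "\<lambda>x. x"] by simp
  have i1: "integrable P (\<lambda>\<omega>. f (W t \<omega>))"
    unfolding loc by (rule ind_integrable[OF act_pred])
  have i2: "integrable P (\<lambda>\<omega>. X b (Suc t) \<omega>)" using X_integrable[OF b] by simp
  show "integrable P (\<lambda>\<omega>. (if act (Suc t) \<omega> = b then 1 else 0) * X b (Suc t) \<omega>)"
    using P.indep_var_integrable[OF iv i1 i2] unfolding loc .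
  show "(\<integral>\<omega>. (if act (Suc t) \<omega> = b then 1 else 0) * X b (Suc t) \<omega> \<partial>P) = P.prob {\<omega>\<in>space P. act (Suc t) \<omega> = b} * \<mu> b"
    using P.indep_var_lebesgue_integral[OF iv i1 i2] X_integral[OF b, of "Suc t"]
      ind_integral[OF act_pred, of "\<lambda>a. a = b" "Suc t"] unfolding loc by simp
qed

lemma X_act_sum: "X (act t \<omega>) t \<omega> = (\<Sum>b\<in>S. (if act t \<omega> = b then 1 else 0) * X b t \<omega>)"
proof -
  have "(\<Sum>b\<in>S. (if act t \<omega> = b then 1 else 0) * X b t \<omega>) = (\<Sum>b\<in>S. if b = act t \<omega> then X b t \<omega> else 0)"
    by (rule sum.cong) auto
  then show ?thesis using act_in[of t \<omega>] arm_tuples_finite[of Ks] by (simp add: sum.delta)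
qed

lemma mu_act_sum: "\<mu> (act t \<omega>) = (\<Sum>b\<in>S. (if act t \<omega> = b then 1 else 0) * \<mu> b)"
proof -
  have "(\<Sum>b\<in>S. (if act t \<omega> = b then 1 else 0) * \<mu> b) = (\<Sum>b\<in>S. if b = act t \<omega> then \<mu> b else 0)"
    by (rule sum.cong) auto
  then show ?thesis using act_in[of t \<omega>] arm_tuples_finite[of Ks] by (simp add: sum.delta)
qed

lemma exp_X_act:
  assumes t: "t \<ge> 1"
  shows "integrable P (\<lambda>\<omega>. X (act t \<omega>) t \<omega>)" "(\<integral>\<omega>. X (act t \<omega>) t \<omega> \<partial>P) = (\<integral>\<omega>. \<mu> (act t \<omega>) \<partial>P)"
proof -
  obtain t' where t': "t = Suc t'" using t by (cases t) auto
  have ints: "integrable P (\<lambda>\<omega>. (if act t \<omega> = b then 1 else 0) * X b t \<omega>)" if "b \<in> S" for b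
    using exp_act_X(1)[OF that, of t'] t' by simp
  show "integrable P (\<lambda>\<omega>. X (act t \<omega>) t \<omega>)"
    unfolding X_act_sum by (rule Bochner_Integration.integrable_sum) (use ints in auto)
  have intm: "integrable P (\<lambda>\<omega>. (if act t \<omega> = b then 1 else 0) * \<mu> b)" for b
    by (intro integrable_mult_left ind_integrable act_pred)
  have "(\<integral>\<omega>. X (act t \<omega>) t \<omega> \<partial>P) = (\<Sum>b\<in>S. \<integral>\<omega>. (if act t \<omega> = b then 1 else 0) * X b t \<omega> \<partial>P)"
    unfolding X_act_sum by (rule Bochner_Integration.integral_sum) (use ints in auto)
  also have "\<dots> = (\<Sum>b\<in>S. P.prob {\<omega>\<in>space P. act t \<omega> = b} * \<mu> b)"
    by (rule sum.cong[OF refl]) (use exp_act_X(2) t' in auto)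
  also have "\<dots> = (\<Sum>b\<in>S. \<integral>\<omega>. (if act t \<omega> = b then 1 else 0) * \<mu> b \<partial>P)"
    by (rule sum.cong[OF refl]) (simp add: ind_integral[OF act_pred, of "\<lambda>a. a = _"])
  also have "\<dots> = (\<integral>\<omega>. \<mu> (act t \<omega>) \<partial>P)"
    unfolding mu_act_sum by (rule Bochner_Integration.integral_sum[symmetric]) (use intm in auto)
  finally show "(\<integral>\<omega>. X (act t \<omega>) t \<omega> \<partial>P) = (\<integral>\<omega>. \<mu> (act t \<omega>) \<partial>P)" .
qed

lemma mu_act_integrable: "integrable P (\<lambda>\<omega>. \<mu> (act t \<omega>))"
  unfolding mu_act_sum by (intro Bochner_Integration.integrable_sum integrable_mult_left ind_integrable act_pred)

lemma regret_eq:
  "(\<integral>\<omega>. (real T * ms - (\<Sum>t=1..T. X (mucb_action Ks (\<lambda>a s. X a s \<omega>) t) t \<omega>)) \<partial>P)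
   = (\<integral>\<omega>. (\<Sum>t=1..T. ms - \<mu> (act t \<omega>)) \<partial>P)"
proof -
  have i1: "integrable P (\<lambda>\<omega>. X (act t \<omega>) t \<omega>)" if "t \<in> {1..T}" for t
    using exp_X_act(1)[of t] that by simp
  have s1: "integrable P (\<lambda>\<omega>. \<Sum>t=1..T. X (act t \<omega>) t \<omega>)"
    by (rule Bochner_Integration.integrable_sum) (use i1 in auto)
  have s2: "integrable P (\<lambda>\<omega>. \<Sum>t=1..T. \<mu> (act t \<omega>))"
    by (rule Bochner_Integration.integrable_sum) (use mu_act_integrable in auto)
  have "(\<integral>\<omega>. (real T * ms - (\<Sum>t=1..T. X (mucb_action Ks (\<lambda>a s. X a s \<omega>) t) t \<omega>)) \<partial>P)
      = (\<integral>\<omega>. (real T * ms - (\<Sum>t=1..T. X (act t \<omega>) t \<omega>)) \<partial>P)" by (simp add: act_X)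
  also have "\<dots> = (\<integral>\<omega>. real T * ms \<partial>P) - (\<integral>\<omega>. (\<Sum>t=1..T. X (act t \<omega>) t \<omega>) \<partial>P)"
    by (rule Bochner_Integration.integral_diff[OF _ s1]) simp
  also have "(\<integral>\<omega>. (\<Sum>t=1..T. X (act t \<omega>) t \<omega>) \<partial>P) = (\<Sum>t=1..T. \<integral>\<omega>. X (act t \<omega>) t \<omega> \<partial>P)"
    by (rule Bochner_Integration.integral_sum) (use i1 in auto)
  also have "\<dots> = (\<Sum>t=1..T. \<integral>\<omega>. \<mu> (act t \<omega>) \<partial>P)"
    by (rule sum.cong[OF refl]) (use exp_X_act(2) in auto)
  also have "\<dots> = (\<integral>\<omega>. (\<Sum>t=1..T. \<mu> (act t \<omega>)) \<partial>P)"
    by (rule Bochner_Integration.integral_sum[symmetric]) (use mu_act_integrable in auto)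
  also have "(\<integral>\<omega>. real T * ms \<partial>P) - (\<integral>\<omega>. (\<Sum>t=1..T. \<mu> (act t \<omega>)) \<partial>P)
      = (\<integral>\<omega>. (real T * ms - (\<Sum>t=1..T. \<mu> (act t \<omega>))) \<partial>P)"
    by (rule Bochner_Integration.integral_diff[symmetric, OF _ s2]) simp
  also have "\<dots> = (\<integral>\<omega>. (\<Sum>t=1..T. ms - \<mu> (act t \<omega>)) \<partial>P)"
    by (simp add: sum_subtractf)
  finally show ?thesis .
qed

end




lemma sum_inv_sq_aux: "N \<ge> 2 \<Longrightarrow> (\<Sum>t\<in>{2..<N}. 1 / (real t)\<^sup>2) \<le> 1 - 1 / real (N - 1)"
proof (induction N rule: nat_induct_at_least)
  case base then show ?case by simp
next
  case (Suc N)
  have "(\<Sum>t\<in>{2..<Suc N}. 1 / (real t)\<^sup>2) = (\<Sum>t\<in>{2..<N}. 1 / (real t)\<^sup>2) + 1 / (real N)\<^sup>2"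
    using Suc.hyps by simp
  also have "\<dots> \<le> 1 - 1 / real (N - 1) + 1 / (real N)\<^sup>2" using Suc.IH by simp
  also have "\<dots> \<le> 1 - 1 / real (Suc N - 1)"
  proof -
    have N: "real N \<ge> 2" using Suc.hyps by simp
    have e: "real (N - 1) = real N - 1" using Suc.hyps by simp
    have "1 / (real N)\<^sup>2 \<le> 1 / (real N - 1) - 1 / real N"
      using N by (simp add: field_simps power2_eq_square)
    then show ?thesis using e by simp
  qed
  finally show ?case .
qed

lemma sum_inv_sq: "K \<ge> 2 \<Longrightarrow> (\<Sum>t\<in>{K..<T}. 1 / (real t)\<^sup>2) \<le> 1"
proof -
  assume K: "K \<ge> 2"
  show ?thesis
  proof (cases "T \<ge> 2")
    case True
    have "(\<Sum>t\<in>{K..<T}. 1 / (real t)\<^sup>2) \<le> (\<Sum>t\<in>{2..<T}. 1 / (real t)\<^sup>2)"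
      by (rule sum_mono2) (use K in auto)
    also have "\<dots> \<le> 1 - 1 / real (T - 1)" by (rule sum_inv_sq_aux[OF True])
    also have "\<dots> \<le> 1" by simp
    finally show ?thesis .
  next
    case False
    then have "{K..<T} = {}" using K by auto
    then show ?thesis by simp
  qed
qed

lemma card_less_real:
  assumes u: "u > 0"
  shows "real (card {n\<in>{1..T}. real n < u}) \<le> u"
proof -
  have sub: "{n\<in>{1..T}. real n < u} \<subseteq> {1..<nat \<lceil>u\<rceil>}"
  proof
    fix n assume "n \<in> {n\<in>{1..T}. real n < u}"
    then have "n \<ge> 1" "real n < u" by auto
    then have "int n < \<lceil>u\<rceil>" by linarith
    then show "n \<in> {1..<nat \<lceil>u\<rceil>}" using \<open>n \<ge> 1\<close> by auto
  qed
  have "card {n\<in>{1..T}. real n < u} \<le> card {1..<nat \<lceil>u\<rceil>}" by (rule card_mono[OF _ sub]) simp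
  also have "\<dots> = nat \<lceil>u\<rceil> - 1" by simp
  finally have "real (card {n\<in>{1..T}. real n < u}) \<le> real (nat \<lceil>u\<rceil> - 1)" by simp
  also have "\<dots> \<le> u"
  proof -
    have c1: "\<lceil>u\<rceil> \<ge> 1" using u by simp
    then have "nat \<lceil>u\<rceil> \<ge> 1" using nat_mono[OF c1] by simp
    then have "real (nat \<lceil>u\<rceil> - 1) = real (nat \<lceil>u\<rceil>) - 1" by (simp add: of_nat_diff)
    also have "real (nat \<lceil>u\<rceil>) = real_of_int \<lceil>u\<rceil>" using c1 by simp
    finally have "real (nat \<lceil>u\<rceil> - 1) = real_of_int \<lceil>u\<rceil> - 1" .
    also have "\<dots> \<le> u" by linarith
    finally show ?thesis .
  qed
  finally show ?thesis .
qed

lemma sqrt2_facts: "(2 + sqrt 2)\<^sup>2 = 6 + 4 * sqrt 2" "(6 - 4 * sqrt 2) * (6 + 4 * sqrt 2) = 4"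
   "(3 - 2 * sqrt 2) * (6 + 4 * sqrt 2) = 2" "sqrt 2 > 1" "sqrt 2 < 3/2"
proof -
  have s: "sqrt 2 * sqrt 2 = 2" by simp
  show "(2 + sqrt 2)\<^sup>2 = 6 + 4 * sqrt 2" by (simp add: power2_eq_square algebra_simps s)
  show "(6 - 4 * sqrt 2) * (6 + 4 * sqrt 2) = 4" by (simp add: algebra_simps s)
  show "(3 - 2 * sqrt 2) * (6 + 4 * sqrt 2) = 2" by (simp add: algebra_simps s)
  show "sqrt 2 > 1" by simp
  have "sqrt 2 < sqrt ((3/2)\<^sup>2)" by (rule real_sqrt_less_mono) (simp add: power2_eq_square)
  then show "sqrt 2 < 3/2" by simp
qed

lemma bad_numeric:
  fixes n :: nat and L D :: real
  assumes n: "n \<ge> 1" and L: "L \<ge> 0" and D: "D > 0"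
    and big: "real n \<ge> (6 + 4 * sqrt 2) * L / D\<^sup>2"
  defines "x \<equiv> real n * D - sqrt (4 * real n * L)"
  shows "x > 0" "2 * x\<^sup>2 / real n \<ge> 4 * L"
proof -
  note s = sqrt2_facts
  have nD: "real n * D\<^sup>2 \<ge> (6 + 4 * sqrt 2) * L" using big D by (simp add: field_simps)
  have "4 * L = (6 - 4 * sqrt 2) * ((6 + 4 * sqrt 2) * L)" using s(2) by (simp add: algebra_simps)
  also have "\<dots> \<le> (6 - 4 * sqrt 2) * (real n * D\<^sup>2)"
    by (rule mult_left_mono[OF nD]) (use s(5) in simp)
  finally have h4: "4 * L \<le> (6 - 4 * sqrt 2) * (real n * D\<^sup>2)" .
  have "4 * real n * L \<le> ((2 - sqrt 2) * real n * D)\<^sup>2"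
  proof -
    have "(2 - sqrt 2)\<^sup>2 = 6 - 4 * sqrt 2" by (simp add: power2_eq_square algebra_simps)
    then have "((2 - sqrt 2) * real n * D)\<^sup>2 = real n * ((6 - 4 * sqrt 2) * (real n * D\<^sup>2))"
      by (simp add: power_mult_distrib algebra_simps power2_eq_square)
    moreover have "4 * real n * L = real n * (4 * L)" by simp
    ultimately show ?thesis using mult_left_mono[OF h4, of "real n"] by simp
  qed
  then have q: "sqrt (4 * real n * L) \<le> (2 - sqrt 2) * real n * D"
    using s(5) D L by (intro real_le_lsqrt) (auto intro: mult_nonneg_nonneg)
  have xl: "x \<ge> (sqrt 2 - 1) * (real n * D)" unfolding x_def using q by (simp add: algebra_simps)
  have pos: "(sqrt 2 - 1) * (real n * D) > 0" using s(4) n D by simp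
  show "x > 0" using xl pos by linarith
  have "x\<^sup>2 \<ge> ((sqrt 2 - 1) * (real n * D))\<^sup>2" using xl pos by (intro power_mono) auto
  moreover have "((sqrt 2 - 1) * (real n * D))\<^sup>2 = (3 - 2 * sqrt 2) * real n * (real n * D\<^sup>2)"
    by (simp add: power2_eq_square algebra_simps)
  ultimately have "2 * x\<^sup>2 / real n \<ge> 2 * (3 - 2 * sqrt 2) * (real n * D\<^sup>2)" using n by (simp add: field_simps)
  moreover have "2 * (3 - 2 * sqrt 2) * (real n * D\<^sup>2) \<ge> 2 * (3 - 2 * sqrt 2) * ((6 + 4 * sqrt 2) * L)"
    by (rule mult_left_mono[OF nD]) (use s(5) in simp)
  moreover have "2 * (3 - 2 * sqrt 2) * ((6 + 4 * sqrt 2) * L) = 4 * L" using s(3) by (simp add: algebra_simps)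
  ultimately show "2 * x\<^sup>2 / real n \<ge> 4 * L" by linarith
qed


lemma eps_T: "T > 0 \<Longrightarrow> L \<ge> 0 \<Longrightarrow> real T * sqrt (L / real T) = sqrt (real T * L)"
proof -
  assume T: "T > 0" and L: "L \<ge> 0"
  have "real T = sqrt (real T * real T)" by simp
  then have "real T * sqrt (L / real T) = sqrt (real T * real T * (L / real T))" by (metis real_sqrt_mult)
  also have "real T * real T * (L / real T) = real T * L" using T by simp
  finally show ?thesis .
qed

lemma L_eps: "T > 0 \<Longrightarrow> L > 0 \<Longrightarrow> L / sqrt (L / real T) = sqrt (real T * L)"
proof -
  assume T: "T > 0" and L: "L > 0"
  have "sqrt (L / real T) = sqrt L / sqrt (real T)" by (simp add: real_sqrt_divide)
  moreover have "L = sqrt L * sqrt L" using L by simp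
  ultimately have "L / sqrt (L / real T) = sqrt L * sqrt (real T)" using T L by (simp add: field_simps)
  then show ?thesis by (simp add: real_sqrt_mult mult.commute)
qed

context bandit
begin

interpretation P: prob_space P by (rule prob)

lemma exp_ln_pow: "t > 0 \<Longrightarrow> exp (- (real k * ln t)) = 1 / t ^ k"
  by (simp add: exp_minus exp_of_nat_mult field_simps)

lemma Sf_rr_meas[measurable]: "(\<lambda>\<omega>. Sf Ks (rr \<omega>) \<mu> T a n) \<in> borel_measurable P"
  by (rule Sf_meas[OF Kpos rr_meas])

lemma D_prob:
  assumes a: "a \<in> S" and t: "t \<ge> 2" and n: "n \<ge> 1"
  shows "P.prob {\<omega>\<in>space P. Sf Ks (rr \<omega>) \<mu> T a n < - sqrt (4 * real n * ln (real t))} \<le> 1 / real t ^ 8"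
proof -
  define x where "x = sqrt (4 * real n * ln (real t))"
  have lt: "ln (real t) > 0" using t by simp
  have x: "x > 0" using lt n by (simp add: x_def)
  have "P.prob {\<omega>\<in>space P. Sf Ks (rr \<omega>) \<mu> T a n < - x} \<le> P.prob {\<omega>\<in>space P. x \<le> -1 * Sf Ks (rr \<omega>) \<mu> T a n}"
    by (rule P.finite_measure_mono) auto
  also have "\<dots> \<le> exp (- 2 * x\<^sup>2 / real n)" by (rule conc[OF a _ x n]) simp
  also have "- 2 * x\<^sup>2 / real n = - (real 8 * ln (real t))" using lt n by (simp add: x_def)
  also have "exp (- (real 8 * ln (real t))) = 1 / real t ^ 8" by (rule exp_ln_pow) (use t in simp)
  finally show ?thesis unfolding x_def .
qed

lemma B_prob_sum:
  assumes a: "a \<in> S" and T: "T \<ge> 2" and Dp: "m - \<mu> a > 0"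
  shows "(\<Sum>n\<in>{1..T}. P.prob {\<omega>\<in>space P. Sf Ks (rr \<omega>) \<mu> T a n \<ge> real n * (m - \<mu> a) - sqrt (4 * real n * ln (real T))})
     \<le> (6 + 4 * sqrt 2) * ln (real T) / (m - \<mu> a)\<^sup>2 + 1"
proof -
  define L where "L = ln (real T)"
  define \<Delta> where "\<Delta> = m - \<mu> a"
  define u where "u = (6 + 4 * sqrt 2) * L / \<Delta>\<^sup>2"
  have L: "L > 0" using T by (simp add: L_def)
  have c0: "6 + 4 * sqrt 2 > (0::real)" by (simp add: add_pos_nonneg)
  have u: "u > 0" unfolding u_def using L Dp c0 by (intro divide_pos_pos mult_pos_pos) (auto simp: \<Delta>_def)
  have each: "P.prob {\<omega>\<in>space P. Sf Ks (rr \<omega>) \<mu> T a n \<ge> real n * \<Delta> - sqrt (4 * real n * L)}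
      \<le> (if real n < u then 1 else 0) + 1 / real T" if n: "n \<in> {1..T}" for n
  proof (cases "real n < u")
    case True
    have "P.prob {\<omega>\<in>space P. Sf Ks (rr \<omega>) \<mu> T a n \<ge> real n * \<Delta> - sqrt (4 * real n * L)} \<le> 1"
      by (rule P.prob_le_1)
    moreover have "0 \<le> 1 / real T" by simp
    moreover have "(if real n < u then 1 else 0) = (1::real)" using True by simp
    ultimately show ?thesis by linarith
  next
    case False
    define x where "x = real n * \<Delta> - sqrt (4 * real n * L)"
    have n1: "n \<ge> 1" using n by simp
    have bn: "x > 0" "2 * x\<^sup>2 / real n \<ge> 4 * L"
      using bad_numeric[OF n1 _ _, of L \<Delta>] L Dp False by (auto simp: u_def x_def \<Delta>_def)
    have "P.prob {\<omega>\<in>space P. Sf Ks (rr \<omega>) \<mu> T a n \<ge> real n * \<Delta> - sqrt (4 * real n * L)}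
        = P.prob {\<omega>\<in>space P. x \<le> 1 * Sf Ks (rr \<omega>) \<mu> T a n}" by (simp add: x_def)
    also have "\<dots> \<le> exp (- 2 * x\<^sup>2 / real n)" by (rule conc[OF a _ bn(1) n1]) simp
    also have "\<dots> \<le> exp (- (real 4 * L))" using bn(2) by simp
    also have "\<dots> = 1 / real T ^ 4" unfolding L_def by (rule exp_ln_pow) (use T in simp)
    also have "\<dots> \<le> 1 / real T"
    proof -
      have "real T \<le> real T ^ 4" using T by (simp add: self_le_power)
      then show ?thesis using T by (simp add: frac_le)
    qed
    finally show ?thesis using False by simp
  qed
  have "(\<Sum>n\<in>{1..T}. P.prob {\<omega>\<in>space P. Sf Ks (rr \<omega>) \<mu> T a n \<ge> real n * \<Delta> - sqrt (4 * real n * L)})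
      \<le> (\<Sum>n\<in>{1..T}. (if real n < u then 1 else 0) + 1 / real T)"
    by (rule sum_mono) (rule each)
  also have "\<dots> = real (card {n\<in>{1..T}. real n < u}) + 1"
    using T by (simp add: sum.distrib sum_ind_card)
  also have "\<dots> \<le> u + 1" using card_less_real[OF u] by simp
  finally show ?thesis unfolding u_def L_def \<Delta>_def .
qed

lemma int_le_const:
  fixes f :: "'w \<Rightarrow> real"
  assumes "integrable P f" "\<And>\<omega>. f \<omega> \<le> B"
  shows "(\<integral>\<omega>. f \<omega> \<partial>P) \<le> B"
proof -
  have "(\<integral>\<omega>. f \<omega> \<partial>P) \<le> (\<integral>\<omega>. B \<partial>P)" by (rule Bochner_Integration.integral_mono) (use assms in auto)
  then show ?thesis by (simp add: P.prob_space)
qed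

theorem regret_bound:
  fixes T :: nat
  defines "ms \<equiv> Max (\<mu> ` S)"
  defines "\<epsilon> \<equiv> sqrt (ln (real T) / real T)"
  shows "(\<integral>\<omega>. (\<Sum>t=1..T. ms - \<mu> (act t \<omega>)) \<partial>P) \<le> 3 * real (prod_list Ks) +
           (1 + (\<Sum>a | a \<in> S \<and> ms - \<mu> a > \<epsilon>. 6 + 4 * sqrt 2)) * sqrt (real T * ln (real T))"
proof -
  define K where "K = prod_list Ks"
  define c where "c = 6 + 4 * sqrt (2::real)"
  define Bad where "Bad = {a\<in>S. ms - \<mu> a > \<epsilon>}"
  define L where "L = ln (real T)"
  have c0: "c > 0" unfolding c_def by (simp add: add_pos_nonneg)
  have finS: "finite S" by (rule arm_tuples_finite)
  have neS: "S \<noteq> {}" using arm_tuples_ne[OF Kpos] by auto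
  have "Max (\<mu> ` S) \<in> \<mu> ` S" using finS neS by (intro Max_in) auto
  then obtain astar where astar: "astar \<in> S" "\<mu> astar = ms" unfolding ms_def by auto
  have le_ms: "\<mu> b \<le> ms" if "b \<in> S" for b using Max_ge[of "\<mu> ` S"] finS that unfolding ms_def by auto
  have D01: "\<forall>b\<in>S. 0 \<le> \<mu> astar - \<mu> b \<and> \<mu> astar - \<mu> b \<le> 1"
  proof
    fix b assume b: "b \<in> S"
    have "0 \<le> \<mu> b" "\<mu> astar \<le> 1" "\<mu> b \<le> ms" using mu_01[OF b] mu_01[OF astar(1)] le_ms[OF b] by auto
    then show "0 \<le> \<mu> astar - \<mu> b \<and> \<mu> astar - \<mu> b \<le> 1" using astar(2) by linarith
  qed
  have term01: "0 \<le> ms - \<mu> (act t \<omega>) \<and> ms - \<mu> (act t \<omega>) \<le> 1" for t \<omega>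
    using D01 act_in[of t \<omega>] astar by auto
  have K1: "K \<ge> 1" unfolding K_def by (rule prod_list_pos[OF Kpos])
  have cardS: "card S \<le> K" unfolding K_def by (rule arm_tuples_card)
  have eps0: "\<epsilon> \<ge> 0" unfolding \<epsilon>_def by (cases "T = 0") auto
  have sumc: "(\<Sum>a | a \<in> S \<and> ms - \<mu> a > \<epsilon>. 6 + 4 * sqrt 2) = real (card Bad) * c"
    by (simp add: Bad_def c_def)
  have sq0: "sqrt (real T * L) \<ge> 0"
    by (cases "T = 0") (auto simp: L_def)
  have LHS_int: "integrable P (\<lambda>\<omega>. \<Sum>t=1..T. ms - \<mu> (act t \<omega>))"
    by (intro Bochner_Integration.integrable_sum Bochner_Integration.integrable_diff P.integrable_const mu_act_integrable)
  have LHS_le_T: "(\<Sum>t=1..T. ms - \<mu> (act t \<omega>)) \<le> real T" for \<omega>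
  proof -
    have "(\<Sum>t=1..T. ms - \<mu> (act t \<omega>)) \<le> (\<Sum>t=1..T. 1)" by (rule sum_mono) (use term01 in auto)
    then show ?thesis by simp
  qed
  have goal_rw: "3 * real (prod_list Ks) + (1 + (\<Sum>a | a \<in> S \<and> ms - \<mu> a > \<epsilon>. 6 + 4 * sqrt 2)) * sqrt (real T * ln (real T))
      = 3 * real K + (1 + real (card Bad) * c) * sqrt (real T * L)"
    unfolding sumc K_def L_def ..
  have rhs_ge: "3 * real K + (1 + real (card Bad) * c) * sqrt (real T * L) \<ge> 3 * real K + sqrt (real T * L)"
    using sq0 c0 by (simp add: algebra_simps)
  consider (T01) "T \<le> 1" | (noBad) "T \<ge> 2" "Bad = {}" | (main) "T \<ge> 2" "Bad \<noteq> {}" by linarith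
  then have main_goal: "(\<integral>\<omega>. (\<Sum>t=1..T. ms - \<mu> (act t \<omega>)) \<partial>P) \<le> 3 * real K + (1 + real (card Bad) * c) * sqrt (real T * L)"
  proof cases
    case T01
    have "(\<integral>\<omega>. (\<Sum>t=1..T. ms - \<mu> (act t \<omega>)) \<partial>P) \<le> real T"
      by (rule int_le_const[OF LHS_int LHS_le_T])
    also have "\<dots> \<le> 3 * real K" using T01 K1 by simp
    finally show ?thesis using rhs_ge sq0 by linarith
  next
    case noBad
    have "(\<Sum>t=1..T. ms - \<mu> (act t \<omega>)) \<le> real T * \<epsilon>" for \<omega>
    proof -
      have "(\<Sum>t=1..T. ms - \<mu> (act t \<omega>)) \<le> (\<Sum>t=1..T. \<epsilon>)"
      proof (rule sum_mono)
        fix t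
        have "act t \<omega> \<notin> Bad" using noBad by simp
        then show "ms - \<mu> (act t \<omega>) \<le> \<epsilon>" using act_in[of t \<omega>] by (auto simp: Bad_def)
      qed
      then show ?thesis by simp
    qed
    then have "(\<integral>\<omega>. (\<Sum>t=1..T. ms - \<mu> (act t \<omega>)) \<partial>P) \<le> real T * \<epsilon>"
      by (rule int_le_const[OF LHS_int])
    also have "real T * \<epsilon> = sqrt (real T * L)" unfolding \<epsilon>_def L_def
      by (rule eps_T) (use noBad in auto)
    finally show ?thesis using rhs_ge K1 by linarith
  next
    case main
    have Lpos: "L > 0" using main by (simp add: L_def)
    have epspos: "\<epsilon> > 0" using main Lpos by (simp add: \<epsilon>_def L_def)
    have astar_nb: "astar \<notin> Bad" using astar eps0 by (simp add: Bad_def)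
    have "card Bad \<le> card (S - {astar})" by (rule card_mono) (use finS astar_nb in \<open>auto simp: Bad_def\<close>)
    moreover have "card S > 0" using finS neS by (simp add: card_gt_0_iff)
    ultimately have mK: "card Bad + 1 \<le> K" using cardS astar finS by (simp add: card_Diff_singleton)
    have finBad: "finite Bad" using finS by (simp add: Bad_def)
    have "card Bad > 0" using finBad main(2) by (simp add: card_gt_0_iff)
    then have K2: "K \<ge> 2" using mK by linarith
    define Dp where "Dp = (\<lambda>t n \<omega>. Sf Ks (rr \<omega>) \<mu> T astar n < - sqrt (4 * real n * ln (real t)))"
    define Bp where "Bp = (\<lambda>a n \<omega>. Sf Ks (rr \<omega>) \<mu> T a n \<ge> real n * (\<mu> astar - \<mu> a) - sqrt (4 * real n * ln (real T)))"
    have pD: "Measurable.pred P (Dp t n)" for t n unfolding Dp_def by measurable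
    have pB: "Measurable.pred P (Bp a n)" for a n unfolding Bp_def by measurable
    define S1 where "S1 = (\<lambda>\<omega>. \<Sum>t\<in>{K..<T}. \<Sum>n\<in>{1..t}. if Dp t n \<omega> then 1 else 0::real)"
    define S2 where "S2 = (\<lambda>\<omega>. \<Sum>a\<in>Bad. (ms - \<mu> a) * (1 + (\<Sum>n\<in>{1..T}. if Bp a n \<omega> then 1 else 0::real)))"
    have pw: "(\<Sum>t=1..T. ms - \<mu> (act t \<omega>)) \<le> real K + \<epsilon> * real T + S1 \<omega> + S2 \<omega>" for \<omega>
      using pathwise[OF Kpos astar(1) D01 eps0, of "rr \<omega>" T]
      unfolding S1_def S2_def Dp_def Bp_def K_def Bad_def act_def astar(2) by simp
    have iS1: "integrable P S1" unfolding S1_def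
      by (intro Bochner_Integration.integrable_sum ind_integrable pD)
    have iS2i: "integrable P (\<lambda>\<omega>. 1 + (\<Sum>n\<in>{1..T}. if Bp a n \<omega> then 1 else 0::real))" for a
      by (intro Bochner_Integration.integrable_add P.integrable_const Bochner_Integration.integrable_sum ind_integrable pB)
    have iS2: "integrable P S2" unfolding S2_def
      by (intro Bochner_Integration.integrable_sum integrable_mult_right iS2i)
    have IS1: "(\<integral>\<omega>. S1 \<omega> \<partial>P) = (\<Sum>t\<in>{K..<T}. \<Sum>n\<in>{1..t}. P.prob {\<omega>\<in>space P. Dp t n \<omega>})"
      unfolding S1_def
      by (simp add: Bochner_Integration.integral_sum Bochner_Integration.integrable_sum ind_integrable[OF pD] ind_integral[OF pD])
    have IS2i: "(\<integral>\<omega>. (1 + (\<Sum>n\<in>{1..T}. if Bp a n \<omega> then 1 else 0::real)) \<partial>P) = 1 + (\<Sum>n\<in>{1..T}. P.prob {\<omega>\<in>space P. Bp a n \<omega>})" for a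
      by (simp add: Bochner_Integration.integral_add Bochner_Integration.integral_sum Bochner_Integration.integrable_sum
          ind_integrable[OF pB] ind_integral[OF pB] P.prob_space)
    have IS2: "(\<integral>\<omega>. S2 \<omega> \<partial>P) = (\<Sum>a\<in>Bad. (ms - \<mu> a) * (1 + (\<Sum>n\<in>{1..T}. P.prob {\<omega>\<in>space P. Bp a n \<omega>})))"
    proof -
      have "(\<integral>\<omega>. S2 \<omega> \<partial>P) = (\<Sum>a\<in>Bad. \<integral>\<omega>. (ms - \<mu> a) * (1 + (\<Sum>n\<in>{1..T}. if Bp a n \<omega> then 1 else 0::real)) \<partial>P)"
        unfolding S2_def by (rule Bochner_Integration.integral_sum) (intro integrable_mult_right iS2i)
      also have "\<dots> = (\<Sum>a\<in>Bad. (ms - \<mu> a) * (\<integral>\<omega>. (1 + (\<Sum>n\<in>{1..T}. if Bp a n \<omega> then 1 else 0::real)) \<partial>P))"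
        by (rule sum.cong[OF refl]) (rule integral_mult_right_zero)
      finally show ?thesis unfolding IS2i .
    qed
    have "(\<integral>\<omega>. (\<Sum>t=1..T. ms - \<mu> (act t \<omega>)) \<partial>P) \<le> (\<integral>\<omega>. real K + \<epsilon> * real T + S1 \<omega> + S2 \<omega> \<partial>P)"
      by (rule Bochner_Integration.integral_mono[OF LHS_int]) (use iS1 iS2 pw in auto)
    also have "\<dots> = real K + \<epsilon> * real T + (\<integral>\<omega>. S1 \<omega> \<partial>P) + (\<integral>\<omega>. S2 \<omega> \<partial>P)"
      using iS1 iS2 by (simp add: Bochner_Integration.integral_add P.prob_space)
    also have "(\<integral>\<omega>. S1 \<omega> \<partial>P) \<le> 1"
    proof -
      have "(\<Sum>t\<in>{K..<T}. \<Sum>n\<in>{1..t}. P.prob {\<omega>\<in>space P. Dp t n \<omega>}) \<le> (\<Sum>t\<in>{K..<T}. \<Sum>n\<in>{1..t}. 1 / real t ^ 8)"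
        by (intro sum_mono) (use D_prob[OF astar(1)] K2 in \<open>auto simp: Dp_def\<close>)
      also have "\<dots> \<le> (\<Sum>t\<in>{K..<T}. 1 / (real t)\<^sup>2)"
      proof (rule sum_mono)
        fix t assume t: "t \<in> {K..<T}"
        then have t1: "real t \<ge> 1" using K1 by simp
        have "(\<Sum>n\<in>{1..t}. 1 / real t ^ 8) = real t * (1 / real t ^ 8)" by simp
        also have "\<dots> = 1 / real t ^ 7"
        proof -
          have "real t ^ 8 = real t * real t ^ 7" by (simp add: power_Suc[symmetric] del: power_Suc)
          then show ?thesis using t1 by (simp add: field_simps)
        qed
        also have "\<dots> \<le> 1 / real t ^ 2"
          using t1 by (intro divide_left_mono power_increasing) auto
        finally show "(\<Sum>n\<in>{1..t}. 1 / real t ^ 8) \<le> 1 / (real t)\<^sup>2" by simp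
      qed
      also have "\<dots> \<le> 1" by (rule sum_inv_sq[OF K2])
      finally show ?thesis unfolding IS1 .
    qed
    also have "(\<integral>\<omega>. S2 \<omega> \<partial>P) \<le> real (card Bad) * (2 + c * sqrt (real T * L))"
    proof -
      have "(\<Sum>a\<in>Bad. (ms - \<mu> a) * (1 + (\<Sum>n\<in>{1..T}. P.prob {\<omega>\<in>space P. Bp a n \<omega>}))) \<le> (\<Sum>a\<in>Bad. 2 + c * sqrt (real T * L))"
      proof (rule sum_mono)
        fix a assume a: "a \<in> Bad"
        define \<Delta> where "\<Delta> = ms - \<mu> a"
        have aS: "a \<in> S" and De: "\<Delta> > \<epsilon>" using a by (auto simp: Bad_def \<Delta>_def)
        have D1: "\<Delta> \<le> 1" using D01 aS astar by (auto simp: \<Delta>_def)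
        have Dpos: "\<Delta> > 0" using De epspos by simp
        have bs: "(\<Sum>n\<in>{1..T}. P.prob {\<omega>\<in>space P. Bp a n \<omega>}) \<le> c * L / \<Delta>\<^sup>2 + 1"
          using B_prob_sum[OF aS main(1), of "\<mu> astar"] Dpos astar(2)
          unfolding Bp_def c_def L_def \<Delta>_def by simp
        have h1: "\<Delta> * (1 + (\<Sum>n\<in>{1..T}. P.prob {\<omega>\<in>space P. Bp a n \<omega>})) \<le> \<Delta> * (2 + c * L / \<Delta>\<^sup>2)"
          using bs Dpos by (intro mult_left_mono) auto
        have h2: "\<Delta> * (2 + c * L / \<Delta>\<^sup>2) = 2 * \<Delta> + c * L / \<Delta>" using Dpos by (simp add: field_simps power2_eq_square)
        have h3: "c * L / \<Delta> \<le> c * L / \<epsilon>"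
          using De epspos c0 Lpos by (intro divide_left_mono) auto
        have h4: "c * L / \<epsilon> = c * sqrt (real T * L)"
        proof -
          have "L / \<epsilon> = sqrt (real T * L)"
            using L_eps[of T L] main Lpos unfolding \<epsilon>_def L_def by simp
          then show ?thesis by (metis times_divide_eq_right)
        qed
        have h5: "\<Delta> * (1 + (\<Sum>n\<in>{1..T}. P.prob {\<omega>\<in>space P. Bp a n \<omega>})) \<le> 2 * \<Delta> + c * L / \<Delta>"
          using h1 unfolding h2 .
        have h6: "2 * \<Delta> + c * L / \<Delta> \<le> 2 + c * sqrt (real T * L)" using h3 h4 D1 by linarith
        have "\<Delta> * (1 + (\<Sum>n\<in>{1..T}. P.prob {\<omega>\<in>space P. Bp a n \<omega>})) \<le> 2 + c * sqrt (real T * L)"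
          using h5 h6 by (rule order.trans)
        then show "(ms - \<mu> a) * (1 + (\<Sum>n\<in>{1..T}. P.prob {\<omega>\<in>space P. Bp a n \<omega>})) \<le> 2 + c * sqrt (real T * L)"
          unfolding \<Delta>_def .
      qed
      then show ?thesis unfolding IS2 by simp
    qed
    also have "\<epsilon> * real T = sqrt (real T * L)" unfolding \<epsilon>_def L_def
      using eps_T[of T "ln (real T)"] main by (simp add: mult.commute)
    finally have "(\<integral>\<omega>. (\<Sum>t=1..T. ms - \<mu> (act t \<omega>)) \<partial>P)
        \<le> real K + sqrt (real T * L) + 1 + real (card Bad) * (2 + c * sqrt (real T * L))" by simp
    also have "\<dots> = real K + 1 + 2 * real (card Bad) + (1 + real (card Bad) * c) * sqrt (real T * L)"
      by (simp add: algebra_simps)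
    also have "\<dots> \<le> 3 * real K + (1 + real (card Bad) * c) * sqrt (real T * L)"
      using mK by simp
    finally show ?thesis .
  qed
  show ?thesis unfolding goal_rw by (rule main_goal)
qed

end


theorem theorem2:
  fixes Ks :: "nat list" and T :: nat
    and P :: "'w measure"
    and X :: "nat list \<Rightarrow> nat \<Rightarrow> 'w \<Rightarrow> real"
    and F :: "nat list \<Rightarrow> real measure"
  assumes Kpos: "\<forall>i<length Ks. 1 \<le> Ks!i"
    and prob: "prob_space P"
    and meas: "\<And>a t. a \<in> arm_tuples Ks \<Longrightarrow> X a t \<in> borel_measurable P"
    and distr: "\<And>a t. a \<in> arm_tuples Ks \<Longrightarrow> distr P borel (X a t) = F a"
    and indep: "prob_space.indep_vars P (\<lambda>_. PiM (arm_tuples Ks) (\<lambda>_. borel))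
                  (\<lambda>t \<omega>. restrict (\<lambda>a. X a t \<omega>) (arm_tuples Ks)) UNIV"
    and supp: "\<And>a. a \<in> arm_tuples Ks \<Longrightarrow> AE x in F a. x \<in> {0..1}"
    and subg: "\<And>a. a \<in> arm_tuples Ks \<Longrightarrow> subgaussian 1 (F a)"
  defines "\<mu> \<equiv> \<lambda>a. \<integral>x. x \<partial>(F a)"
  defines "\<mu>star \<equiv> Max (\<mu> ` arm_tuples Ks)"
  defines "\<Delta> \<equiv> \<lambda>a. \<mu>star - \<mu> a"
  defines "R \<equiv> \<integral>\<omega>. (real T * \<mu>star -
                (\<Sum>t=1..T. X (mucb_action Ks (\<lambda>a s. X a s \<omega>) t) t \<omega>)) \<partial>P"
  defines "\<epsilon> \<equiv> sqrt (ln (real T) / real T)"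
  shows "R \<le> 3 * real (prod_list Ks) +
           (1 + (\<Sum>a | a \<in> arm_tuples Ks \<and> \<Delta> a > \<epsilon>. 6 + 4 * sqrt 2))
             * sqrt (real T * ln (real T))"
proof -
  interpret B: bandit Ks P X F
    by (rule bandit.intro[OF Kpos prob meas distr indep supp])
  have mu: "\<mu> = B.\<mu>" unfolding \<mu>_def by (rule ext) (simp add: B.\<mu>_def)
  have "R = (\<integral>\<omega>. (\<Sum>t=1..T. \<mu>star - B.\<mu> (B.act t \<omega>)) \<partial>P)"
    unfolding R_def mu by (rule B.regret_eq)
  also have "\<dots> \<le> 3 * real (prod_list Ks) +
           (1 + (\<Sum>a | a \<in> arm_tuples Ks \<and> \<mu>star - B.\<mu> a > \<epsilon>. 6 + 4 * sqrt 2)) * sqrt (real T * ln (real T))"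
    using B.regret_bound[of T] unfolding \<mu>star_def \<epsilon>_def mu .
  finally show ?thesis unfolding \<Delta>_def mu .
qed


end
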